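(* Let $0<\alpha_1\le\dots\le\alpha_n\le1$, $\alpha_0:=0$. For all $p,q\in\mathcal{S}_2^n$, the fractional join of $p,q$ with respect to the valuation $v_{\boldsymbol\alpha}$ equals the formal combination $$\sum_{i=0}^{n-1}\Big(\frac1{1+\alpha_i}-\frac1{1+\alpha_{i+1}}\Big)\big((p\vee_L^iq)+(p\vee_R^iq)\big)+\frac{1-\alpha_n}{1+\alpha_n}(p\sqcup^nq)$$ (coefficients of equal elements added).
   Context: $\mathcal{S}_2=\{-,0,+\}$ with minimum $0$ and incomparable $-,+$; $\mathcal{S}_2^n$ has the componentwise order. Operations on $\mathcal{S}_2$: $x\sqcup y$ is the larger of $x,y$ if comparable and $0$ if $\{x,y\}=\{-,+\}$; $x\sqcup_+y=+$ if $\{x,y\}=\{-,+\}$, else $x\sqcup y$; $x\vee_Ly=x$ if $x\ne0$ and $y$ if $x=0$; $x\vee_Ry=y$ if $y\ne0$ and $x$ if $y=0$. For $i=0,\dots,n$: $\sqcup^i,\vee_L^i,\vee_R^i$ apply $\sqcup_+$ in the first $i$ coordinates and respectively $\sqcup,\vee_L,\vee_R$ in the remaining coordinates. Valuation: $v_i(0)=0,v_i(+)=1,v_i(-)=\alpha_i$, $v_{\boldsymbol\alpha}(x)=\sum_iv_i(x_i)$. Fractional join w.r.t. $v=v_{\boldsymbol\alpha}$: $I(p,q)$ is the set of elements on shortest $p$–$q$ paths of the covering graph; $v(u;p,q)=(v(u\wedge p)-v(p\wedge q),v(u\wedge q)-v(p\wedge q))$ ($\wedge$ = meet); $\mathcal{E}(p,q)$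 the $u\in I(p,q)$ with $v(u;p,q)$ a componentwise-maximal extreme point of the convex hull $\mathrm{Conv}I(p,q)$; $C(u;p,q)=\{w\in\mathbf{R}^2_{\ge0}:\langle w,v(u;p,q)\rangle=\max_{z\in\mathrm{Conv}I(p,q)}\langle w,z\rangle\}=\{(x,y)\ge0:y\cos\alpha\le x\sin\alpha,\ y\cos\beta\ge x\sin\beta\}$ ($0\le\beta\le\alpha\le\pi/2$), $[C]=\frac{\sin\alpha}{\sin\alpha+\cos\alpha}-\frac{\sin\beta}{\sin\beta+\cos\beta}$; the fractional join is $\sum_{u\in\mathcal{E}(p,q)}[C(u;p,q)]u$. *)

theory Defs
  imports "HOL-Analysis.Analysis"
begin

datatype s2 = Minus | Zero | Plus

definition s2_le :: "s2 \<Rightarrow> s2 \<Rightarrow> bool" where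
  "s2_le x y \<longleftrightarrow> x = Zero \<or> x = y"

definition s2_join :: "s2 \<Rightarrow> s2 \<Rightarrow> s2" where
  "s2_join x y = (if s2_le x y then y else if s2_le y x then x else Zero)"

definition s2_join_plus :: "s2 \<Rightarrow> s2 \<Rightarrow> s2" where
  "s2_join_plus x y = (if {x, y} = {Minus, Plus} then Plus else s2_join x y)"

definition s2_vL :: "s2 \<Rightarrow> s2 \<Rightarrow> s2" where
  "s2_vL x y = (if x \<noteq> Zero then x else y)"

definition s2_vR :: "s2 \<Rightarrow> s2 \<Rightarrow> s2" where
  "s2_vR x y = (if y \<noteq> Zero then y else x)"

definition s2_meet :: "s2 \<Rightarrow> s2 \<Rightarrow> s2" where
  "s2_meet x y = (if x = y then x else Zero)"

(* S_2^n: coordinates indexed 1..n, all other coordinates are Zero *)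
definition S2n :: "nat \<Rightarrow> (nat \<Rightarrow> s2) set" where
  "S2n n = {x. \<forall>j. (j = 0 \<or> n < j) \<longrightarrow> x j = Zero}"

definition leq :: "(nat \<Rightarrow> s2) \<Rightarrow> (nat \<Rightarrow> s2) \<Rightarrow> bool" where
  "leq x y \<longleftrightarrow> (\<forall>j. s2_le (x j) (y j))"

definition meet :: "(nat \<Rightarrow> s2) \<Rightarrow> (nat \<Rightarrow> s2) \<Rightarrow> (nat \<Rightarrow> s2)" where
  "meet x y = (\<lambda>j. s2_meet (x j) (y j))"

(* the operations sqcup^i, vee_L^i, vee_R^i: sqcup_+ on coordinates 1..i, f on the rest *)
definition op_i :: "nat \<Rightarrow> (s2 \<Rightarrow> s2 \<Rightarrow> s2) \<Rightarrow> (nat \<Rightarrow> s2) \<Rightarrow> (nat \<Rightarrow> s2) \<Rightarrow> (nat \<Rightarrow> s2)" where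
  "op_i i f p q = (\<lambda>j. if j \<le> i then s2_join_plus (p j) (q j) else f (p j) (q j))"

definition join_i where "join_i i = op_i i s2_join"
definition vL_i where "vL_i i = op_i i s2_vL"
definition vR_i where "vR_i i = op_i i s2_vR"

definition v_coord :: "(nat \<Rightarrow> real) \<Rightarrow> nat \<Rightarrow> s2 \<Rightarrow> real" where
  "v_coord \<alpha> j x = (case x of Zero \<Rightarrow> 0 | Plus \<Rightarrow> 1 | Minus \<Rightarrow> \<alpha> j)"

definition val :: "nat \<Rightarrow> (nat \<Rightarrow> real) \<Rightarrow> (nat \<Rightarrow> s2) \<Rightarrow> real" where
  "val n \<alpha> x = (\<Sum>j=1..n. v_coord \<alpha> j (x j))"

definition lt_n :: "nat \<Rightarrow> (nat \<Rightarrow> s2) \<Rightarrow> (nat \<Rightarrow> s2) \<Rightarrow> bool" where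
  "lt_n n x y \<longleftrightarrow> x \<in> S2n n \<and> y \<in> S2n n \<and> leq x y \<and> x \<noteq> y"

definition covers :: "nat \<Rightarrow> (nat \<Rightarrow> s2) \<Rightarrow> (nat \<Rightarrow> s2) \<Rightarrow> bool" where
  "covers n x y \<longleftrightarrow> lt_n n x y \<and> \<not> (\<exists>z. lt_n n x z \<and> lt_n n z y)"

definition adj :: "nat \<Rightarrow> (nat \<Rightarrow> s2) \<Rightarrow> (nat \<Rightarrow> s2) \<Rightarrow> bool" where
  "adj n x y \<longleftrightarrow> covers n x y \<or> covers n y x"

definition is_walk :: "nat \<Rightarrow> (nat \<Rightarrow> s2) list \<Rightarrow> (nat \<Rightarrow> s2) \<Rightarrow> (nat \<Rightarrow> s2) \<Rightarrow> bool" where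
  "is_walk n xs p q \<longleftrightarrow> xs \<noteq> [] \<and> hd xs = p \<and> last xs = q \<and> set xs \<subseteq> S2n n \<and>
     (\<forall>k. Suc k < length xs \<longrightarrow> adj n (xs ! k) (xs ! Suc k))"

definition is_shortest_path :: "nat \<Rightarrow> (nat \<Rightarrow> s2) list \<Rightarrow> (nat \<Rightarrow> s2) \<Rightarrow> (nat \<Rightarrow> s2) \<Rightarrow> bool" where
  "is_shortest_path n xs p q \<longleftrightarrow> is_walk n xs p q \<and> (\<forall>ys. is_walk n ys p q \<longrightarrow> length xs \<le> length ys)"

definition interval :: "nat \<Rightarrow> (nat \<Rightarrow> s2) \<Rightarrow> (nat \<Rightarrow> s2) \<Rightarrow> (nat \<Rightarrow> s2) set" where
  "interval n p q = {u. \<exists>xs. is_shortest_path n xs p q \<and> u \<in> set xs}"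

definition vpt :: "nat \<Rightarrow> (nat \<Rightarrow> real) \<Rightarrow> (nat \<Rightarrow> s2) \<Rightarrow> (nat \<Rightarrow> s2) \<Rightarrow> (nat \<Rightarrow> s2) \<Rightarrow> real \<times> real" where
  "vpt n \<alpha> u p q = (val n \<alpha> (meet u p) - val n \<alpha> (meet p q), val n \<alpha> (meet u q) - val n \<alpha> (meet p q))"

definition convI :: "nat \<Rightarrow> (nat \<Rightarrow> real) \<Rightarrow> (nat \<Rightarrow> s2) \<Rightarrow> (nat \<Rightarrow> s2) \<Rightarrow> (real \<times> real) set" where
  "convI n \<alpha> p q = convex hull ((\<lambda>u. vpt n \<alpha> u p q) ` interval n p q)"

definition Eset :: "nat \<Rightarrow> (nat \<Rightarrow> real) \<Rightarrow> (nat \<Rightarrow> s2) \<Rightarrow> (nat \<Rightarrow> s2) \<Rightarrow> (nat \<Rightarrow> s2) set" where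
  "Eset n \<alpha> p q = {u \<in> interval n p q.
     vpt n \<alpha> u p q extreme_point_of convI n \<alpha> p q \<and>
     (\<forall>z \<in> convI n \<alpha> p q. fst (vpt n \<alpha> u p q) \<le> fst z \<and> snd (vpt n \<alpha> u p q) \<le> snd z
        \<longrightarrow> z = vpt n \<alpha> u p q)}"

definition cone :: "nat \<Rightarrow> (nat \<Rightarrow> real) \<Rightarrow> (nat \<Rightarrow> s2) \<Rightarrow> (nat \<Rightarrow> s2) \<Rightarrow> (nat \<Rightarrow> s2) \<Rightarrow> (real \<times> real) set" where
  "cone n \<alpha> u p q = {w. 0 \<le> fst w \<and> 0 \<le> snd w \<and>
     w \<bullet> vpt n \<alpha> u p q = (SUP z \<in> convI n \<alpha> p q. w \<bullet> z)}"

definition cone_measure :: "(real \<times> real) set \<Rightarrow> real" where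
  "cone_measure C = (THE m. \<exists>a b. 0 \<le> b \<and> b \<le> a \<and> a \<le> pi / 2 \<and>
      C = {(x, y). 0 \<le> x \<and> 0 \<le> y \<and> y * cos a \<le> x * sin a \<and> y * cos b \<ge> x * sin b} \<and>
      m = sin a / (sin a + cos a) - sin b / (sin b + cos b))"

(* fractional join as a formal real combination: element \<mapsto> its coefficient *)
definition frac_join :: "nat \<Rightarrow> (nat \<Rightarrow> real) \<Rightarrow> (nat \<Rightarrow> s2) \<Rightarrow> (nat \<Rightarrow> s2) \<Rightarrow> (nat \<Rightarrow> s2) \<Rightarrow> real" where
  "frac_join n \<alpha> p q = (\<lambda>x. \<Sum>u \<in> {u \<in> Eset n \<alpha> p q. u = x}. cone_measure (cone n \<alpha> u p q))"

end

theory Submission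
  imports Defs
begin


definition d1 :: "s2 \<Rightarrow> s2 \<Rightarrow> nat" where
  "d1 x y = (if x = y then 0 else if x = Zero \<or> y = Zero then 1 else 2)"

definition Dn :: "nat \<Rightarrow> (nat\<Rightarrow>s2) \<Rightarrow> (nat\<Rightarrow>s2) \<Rightarrow> nat" where
  "Dn n x y = (\<Sum>j=1..n. d1 (x j) (y j))"

lemma d1_tri: "d1 x z \<le> d1 x y + d1 y z"
  by (cases x; cases y; cases z; simp add: d1_def)
lemma d1_sym: "d1 x y = d1 y x" by (auto simp: d1_def)
lemma d1_0[simp]: "d1 x x = 0" by (simp add: d1_def)

lemma Dn_tri: "Dn n x z \<le> Dn n x y + Dn n y z"
  unfolding Dn_def sum.distrib[symmetric] by (rule sum_mono) (rule d1_tri)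
lemma Dn_sym: "Dn n x y = Dn n y x" unfolding Dn_def by (simp add: d1_sym)
lemma Dn_0[simp]: "Dn n x x = 0" by (simp add: Dn_def)

lemma S2n_out: "x \<in> S2n n \<Longrightarrow> j \<notin> {1..n} \<Longrightarrow> x j = Zero"
  unfolding S2n_def by (cases "j = 0") auto

lemma Dn_eq0: assumes "x \<in> S2n n" "y \<in> S2n n" "Dn n x y = 0" shows "x = y"
proof
  fix j show "x j = y j"
  proof (cases "j \<in> {1..n}")
    case True
    then have "d1 (x j) (y j) = 0" using assms(3) unfolding Dn_def by simp
    then show ?thesis by (simp add: d1_def split: if_splits)
  next
    case False then show ?thesis using assms S2n_out by metis
  qed
qed

lemma sum_swap1:
  fixes f g :: "'i \<Rightarrow> 'a::comm_monoid_add"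
  assumes "finite A" "j \<in> A" "\<And>k. k \<in> A \<Longrightarrow> k \<noteq> j \<Longrightarrow> f k = g k"
  shows "sum f A + g j = sum g A + f j"
proof -
  have "sum f A = f j + sum f (A - {j})" using assms by (simp add: sum.remove)
  moreover have "sum g A = g j + sum g (A - {j})" using assms by (simp add: sum.remove)
  moreover have "sum f (A - {j}) = sum g (A - {j})" using assms by (intro sum.cong) auto
  ultimately show ?thesis by (simp add: ac_simps)
qed

lemma s2_le_antisym: "s2_le a b \<Longrightarrow> s2_le b a \<Longrightarrow> a = b" by (auto simp: s2_le_def)

lemma covers_Dn: assumes "covers n x y" shows "Dn n x y = 1"
proof -
  from assms have lt: "lt_n n x y" and nz: "\<not> (\<exists>z. lt_n n x z \<and> lt_n n z y)" by (auto simp: covers_def)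
  then have xS: "x \<in> S2n n" and yS: "y \<in> S2n n" and le: "leq x y" and ne: "x \<noteq> y"
    by (auto simp: lt_n_def)
  obtain j where j: "x j \<noteq> y j" using ne by auto
  have jr: "j \<in> {1..n}" using j xS yS S2n_out by metis
  have xj: "x j = Zero" using le j by (auto simp: leq_def s2_le_def)
  have oth: "x k = y k" if k: "k \<in> {1..n}" "k \<noteq> j" for k
  proof (rule ccontr)
    assume kn: "x k \<noteq> y k"
    define z where "z = x(k := y k)"
    have zS: "z \<in> S2n n" using xS k by (auto simp: S2n_def z_def)
    have "lt_n n x z" using xS zS le kn unfolding lt_n_def leq_def z_def
      by (auto simp: s2_le_def) (metis fun_upd_same)
    moreover have "lt_n n z y" using yS zS le k j xj unfolding lt_n_def leq_def z_def
      by (auto simp: s2_le_def) (metis fun_upd_other)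
    ultimately show False using nz by blast
  qed
  have "Dn n x y = (\<Sum>k=1..n. if k = j then 1 else 0)"
    unfolding Dn_def using oth j xj by (intro sum.cong) (auto simp: d1_def)
  also have "\<dots> = 1" using jr by simp
  finally show ?thesis .
qed

lemma adj_Dn: "adj n x y \<Longrightarrow> Dn n x y = 1"
  using covers_Dn Dn_sym by (metis adj_def)

lemma covers_intro:
  assumes "x \<in> S2n n" "y \<in> S2n n" "x j = Zero" "y j \<noteq> Zero" "\<And>k. k \<noteq> j \<Longrightarrow> x k = y k"
  shows "covers n x y"
proof -
  have le: "leq x y" unfolding leq_def s2_le_def using assms by metis
  have ne: "x \<noteq> y" using assms by auto
  have "\<not> (lt_n n x z \<and> lt_n n z y)" for z
  proof
    assume a: "lt_n n x z \<and> lt_n n z y"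
    then have l1: "leq x z" "leq z y" "z \<noteq> x" "z \<noteq> y" by (auto simp: lt_n_def)
    have zk: "z k = x k" if "k \<noteq> j" for k
      using l1 assms(5)[OF that] by (metis leq_def s2_le_antisym)
    have "z j = Zero \<or> z j = y j" using l1 by (auto simp: leq_def s2_le_def)
    then show False
    proof
      assume "z j = Zero" then have "z = x" using zk assms(3) by (metis ext)
      then show False using l1 by simp
    next
      assume "z j = y j" then have "z = y" using zk assms(5) by (metis ext)
      then show False using l1 by simp
    qed
  qed
  then show ?thesis using assms le ne by (auto simp: covers_def lt_n_def)
qed

lemma is_walk_single: "is_walk n [a] p q \<longleftrightarrow> a = p \<and> a = q \<and> a \<in> S2n n"
  by (auto simp: is_walk_def)

lemma all_nat_split: "(\<forall>k::nat. P k) = (P 0 \<and> (\<forall>k. P (Suc k)))"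
  by (metis not0_implies_Suc)

lemma is_walk_Cons2: "is_walk n (a # b # r) p q \<longleftrightarrow>
   a = p \<and> a \<in> S2n n \<and> adj n a b \<and> is_walk n (b # r) b q"
  unfolding is_walk_def by (subst all_nat_split) auto

lemma walk_len: "is_walk n xs p q \<Longrightarrow> Dn n p q + 1 \<le> length xs"
proof (induction xs arbitrary: p)
  case Nil then show ?case by (simp add: is_walk_def)
next
  case (Cons a xs)
  show ?case
  proof (cases xs)
    case Nil then show ?thesis using Cons.prems by (auto simp: is_walk_single)
  next
    case (Cons b r)
    with Cons.prems have w: "a = p" "adj n a b" "is_walk n xs b q" by (auto simp: is_walk_Cons2)
    have "Dn n p q \<le> Dn n p b + Dn n b q" by (rule Dn_tri)
    then show ?thesis using Cons.IH[OF w(3)] adj_Dn[OF w(2)] w(1) by simp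
  qed
qed

lemma walk_mem: "is_walk n xs p q \<Longrightarrow> u \<in> set xs \<Longrightarrow> Dn n p u + Dn n u q + 1 \<le> length xs"
proof (induction xs arbitrary: p)
  case Nil then show ?case by (simp add: is_walk_def)
next
  case (Cons a xs)
  show ?case
  proof (cases xs)
    case Nil then show ?thesis using Cons.prems by (auto simp: is_walk_single)
  next
    case (Cons b r)
    with Cons.prems have w: "a = p" "adj n a b" "is_walk n xs b q" by (auto simp: is_walk_Cons2)
    show ?thesis
    proof (cases "u = a")
      case True then show ?thesis using walk_len[OF Cons.prems(1)] w by simp
    next
      case False
      then have "u \<in> set xs" using Cons.prems by simp
      from Cons.IH[OF w(3) this] have "Dn n b u + Dn n u q + 1 \<le> length xs" .
      moreover have "Dn n p u \<le> Dn n p b + Dn n b u" by (rule Dn_tri)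
      ultimately show ?thesis using adj_Dn[OF w(2)] w(1) by simp
    qed
  qed
qed

lemma walk_ex: "x \<in> S2n n \<Longrightarrow> y \<in> S2n n \<Longrightarrow> \<exists>xs. is_walk n xs x y \<and> length xs = Dn n x y + 1"
proof (induction "Dn n x y" arbitrary: x)
  case 0
  then have "x = y" using Dn_eq0 by metis
  then show ?case using 0 by (intro exI[of _ "[x]"]) (simp add: is_walk_single)
next
  case (Suc k)
  have "x \<noteq> y" using Suc.hyps(2) by auto
  then obtain j where j: "x j \<noteq> y j" by auto
  have jr: "j \<in> {1..n}" using j Suc.prems S2n_out by metis
  define x' where "x' = x(j := if x j = Zero then y j else Zero)"
  have x'S: "x' \<in> S2n n" using Suc.prems jr by (auto simp: S2n_def x'_def)
  have ad: "adj n x x'"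
  proof (cases "x j = Zero")
    case True
    then have "covers n x x'" using j Suc.prems x'S by (intro covers_intro[where j=j]) (auto simp: x'_def)
    then show ?thesis by (simp add: adj_def)
  next
    case False
    then have "covers n x' x" using j Suc.prems x'S by (intro covers_intro[where j=j]) (auto simp: x'_def)
    then show ?thesis by (simp add: adj_def)
  qed
  have "Dn n x' y + d1 (x j) (y j) = Dn n x y + d1 (x' j) (y j)"
    unfolding Dn_def using jr by (intro sum_swap1) (auto simp: x'_def)
  moreover have "d1 (x j) (y j) = d1 (x' j) (y j) + 1" using j
    by (cases "x j"; cases "y j") (auto simp: x'_def d1_def)
  ultimately have "k = Dn n x' y" using Suc.hyps(2) by simp
  from Suc.hyps(1)[OF this x'S Suc.prems(2)] obtain xs where
    xs: "is_walk n xs x' y" "length xs = Dn n x' y + 1" by blast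
  then obtain r where r: "xs = x' # r" by (cases xs) (auto simp: is_walk_def)
  have "is_walk n (x # xs) x y" using xs r ad Suc.prems by (simp add: is_walk_Cons2)
  then show ?case using xs \<open>k = Dn n x' y\<close> Suc.hyps(2) by (intro exI[of _ "x # xs"]) simp
qed

lemma walk_app: "is_walk n w1 p u \<Longrightarrow> is_walk n w2 u q \<Longrightarrow> is_walk n (w1 @ tl w2) p q"
proof (induction w1 arbitrary: p)
  case Nil then show ?case by (simp add: is_walk_def)
next
  case (Cons a w1)
  show ?case
  proof (cases w1)
    case Nil
    then have "a = p" "a = u" using Cons.prems by (auto simp: is_walk_single)
    moreover obtain b r where "w2 = b # r" using Cons.prems by (cases w2) (auto simp: is_walk_def)
    ultimately show ?thesis using Cons.prems Nil by (auto simp: is_walk_def)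
  next
    case (Cons b r)
    with Cons.prems have w: "a = p" "a \<in> S2n n" "adj n a b" "is_walk n w1 b u" by (auto simp: is_walk_Cons2)
    have "is_walk n (w1 @ tl w2) b q" by (rule Cons.IH[OF w(4) Cons.prems(2)])
    then show ?thesis using w Cons by (simp add: is_walk_Cons2)
  qed
qed

lemma interval_Dn:
  assumes p: "p \<in> S2n n" and q: "q \<in> S2n n"
  shows "interval n p q = {u \<in> S2n n. Dn n p u + Dn n u q = Dn n p q}"
proof (intro set_eqI iffI)
  fix u assume "u \<in> interval n p q"
  then obtain xs where sp: "is_shortest_path n xs p q" "u \<in> set xs" by (auto simp: interval_def)
  obtain ys where ys: "is_walk n ys p q" "length ys = Dn n p q + 1" using walk_ex[OF p q] by blast
  have "length xs \<le> length ys" using sp ys by (auto simp: is_shortest_path_def)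
  moreover have "Dn n p u + Dn n u q + 1 \<le> length xs" using walk_mem sp by (auto simp: is_shortest_path_def)
  moreover have "Dn n p q \<le> Dn n p u + Dn n u q" by (rule Dn_tri)
  moreover have "u \<in> S2n n" using sp by (auto simp: is_shortest_path_def is_walk_def)
  ultimately show "u \<in> {u \<in> S2n n. Dn n p u + Dn n u q = Dn n p q}" using ys by simp
next
  fix u assume u: "u \<in> {u \<in> S2n n. Dn n p u + Dn n u q = Dn n p q}"
  obtain w1 where w1: "is_walk n w1 p u" "length w1 = Dn n p u + 1" using walk_ex p u by blast
  obtain w2 where w2: "is_walk n w2 u q" "length w2 = Dn n u q + 1" using walk_ex q u by blast
  have w: "is_walk n (w1 @ tl w2) p q" using walk_app w1 w2 by blast
  have "is_shortest_path n (w1 @ tl w2) p q"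
    unfolding is_shortest_path_def using w w1 w2 u walk_len by fastforce
  moreover have "u \<in> set (w1 @ tl w2)" using w1 by (auto simp: is_walk_def)
  ultimately show "u \<in> interval n p q" by (auto simp: interval_def)
qed

definition In1 :: "s2 \<Rightarrow> s2 \<Rightarrow> s2 set" where
  "In1 a b = {c. d1 a c + d1 c b = d1 a b}"

lemma interval_char:
  assumes p: "p \<in> S2n n" and q: "q \<in> S2n n"
  shows "interval n p q = {u \<in> S2n n. \<forall>j\<in>{1..n}. u j \<in> In1 (p j) (q j)}"
proof -
  have "Dn n p u + Dn n u q = Dn n p q \<longleftrightarrow> (\<forall>j\<in>{1..n}. u j \<in> In1 (p j) (q j))" for u
  proof
    assume e: "Dn n p u + Dn n u q = Dn n p q"
    show "\<forall>j\<in>{1..n}. u j \<in> In1 (p j) (q j)"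
    proof
      fix j assume j: "j \<in> {1..n}"
      have "(\<Sum>j=1..n. d1 (p j) (q j)) = (\<Sum>j=1..n. d1 (p j) (u j) + d1 (u j) (q j))"
        using e by (simp add: Dn_def sum.distrib)
      from sum_mono_inv[OF this _ j] have "d1 (p j) (q j) = d1 (p j) (u j) + d1 (u j) (q j)"
        using d1_tri by auto
      then show "u j \<in> In1 (p j) (q j)" by (simp add: In1_def)
    qed
  next
    assume "\<forall>j\<in>{1..n}. u j \<in> In1 (p j) (q j)"
    then show "Dn n p u + Dn n u q = Dn n p q"
      unfolding Dn_def sum.distrib[symmetric] by (intro sum.cong) (auto simp: In1_def)
  qed
  then show ?thesis using interval_Dn[OF p q] by auto
qed


definition hc :: "(nat \<Rightarrow> real) \<Rightarrow> nat \<Rightarrow> real \<times> real \<Rightarrow> s2 \<Rightarrow> s2 \<Rightarrow> s2 \<Rightarrow> real" where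
  "hc \<alpha> j w pj qj c = fst w * (v_coord \<alpha> j (s2_meet c pj) - v_coord \<alpha> j (s2_meet pj qj))
      + snd w * (v_coord \<alpha> j (s2_meet c qj) - v_coord \<alpha> j (s2_meet pj qj))"

lemma inner_vpt: "w \<bullet> vpt n \<alpha> u p q = (\<Sum>j=1..n. hc \<alpha> j w (p j) (q j) (u j))"
  by (cases w) (simp add: vpt_def val_def meet_def hc_def sum_subtractf[symmetric]
      sum_distrib_left sum.distrib[symmetric])

definition lr :: "real \<Rightarrow> s2 \<Rightarrow> s2 \<Rightarrow> s2 \<Rightarrow> real \<times> real" where
  "lr a pj qj x = (if pj = Minus \<and> qj = Plus then (case x of Minus \<Rightarrow> (0,a) | Plus \<Rightarrow> (a,1) | Zero \<Rightarrow> (1,0))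
     else if pj = Plus \<and> qj = Minus then (case x of Plus \<Rightarrow> (0,1-a) | Minus \<Rightarrow> (1-a,1) | Zero \<Rightarrow> (1,0))
     else if qj = Zero \<and> pj \<noteq> Zero then (if x = Zero then (1,1) else (0,1))
     else if pj = Zero \<and> qj \<noteq> Zero then (if x = Zero then (0,0) else (0,1))
     else (0,1))"

lemma all_s2: "(\<forall>c. P c) \<longleftrightarrow> P Minus \<and> P Zero \<and> P Plus"
  by (metis s2.exhaust)

lemma coord_weak:
  fixes w :: "real \<times> real"
  assumes al: "0 < \<alpha> j" "\<alpha> j \<le> 1" and w: "0 \<le> fst w" "0 \<le> snd w" and x: "x \<in> In1 pj qj"
  shows "(\<forall>c\<in>In1 pj qj. hc \<alpha> j w pj qj c \<le> hc \<alpha> j w pj qj x) \<longleftrightarrow>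
    fst (lr (\<alpha> j/(1+\<alpha> j)) pj qj x) * (fst w + snd w) \<le> snd w \<and>
    snd w \<le> snd (lr (\<alpha> j/(1+\<alpha> j)) pj qj x) * (fst w + snd w)"
proof -
  obtain w1 w2 where ww: "w = (w1, w2)" by (cases w)
  have p1: "1 + \<alpha> j > 0" using al by simp
  have e1: "w2 \<le> \<alpha> j / (1 + \<alpha> j) * (w1 + w2) \<longleftrightarrow> w2 \<le> w1 * \<alpha> j"
    using p1 by (simp add: field_simps)
  have e2: "\<alpha> j / (1 + \<alpha> j) * (w1 + w2) \<le> w2 \<longleftrightarrow> w1 * \<alpha> j \<le> w2"
    using p1 by (simp add: field_simps)
  have e3: "w2 \<le> (1 - \<alpha> j / (1 + \<alpha> j)) * (w1 + w2) \<longleftrightarrow> w2 * \<alpha> j \<le> w1"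
    using p1 by (simp add: field_simps)
  have e4: "(1 - \<alpha> j / (1 + \<alpha> j)) * (w1 + w2) \<le> w2 \<longleftrightarrow> w1 \<le> w2 * \<alpha> j"
    using p1 by (simp add: field_simps)
  show ?thesis
    using x w al p1 unfolding ww
    apply (cases pj; cases qj; cases x)
    apply (simp_all add: In1_def d1_def hc_def lr_def s2_meet_def v_coord_def Ball_def all_s2 e1 e2 e3 e4
          mult_le_0_iff zero_le_mult_iff)
    apply (auto simp: field_simps)
    done
qed

lemma coord_strict:
  assumes al: "0 < \<alpha> j" "\<alpha> j \<le> 1" and s: "0 < s" "s < 1" and x: "x \<in> In1 pj qj"
    and l: "fst (lr (\<alpha> j/(1+\<alpha> j)) pj qj x) < s" and r: "s < snd (lr (\<alpha> j/(1+\<alpha> j)) pj qj x)"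
    and c: "c \<in> In1 pj qj" "c \<noteq> x"
  shows "hc \<alpha> j (1-s, s) pj qj c < hc \<alpha> j (1-s, s) pj qj x"
proof -
  have p1: "1 + \<alpha> j > 0" using al by simp
  show ?thesis
    using x al p1 s l r c
    apply (cases pj; cases qj; cases x; cases c)
    apply (simp_all add: In1_def d1_def hc_def lr_def s2_meet_def v_coord_def)
    apply (auto simp: field_simps)
    done
qed


lemma finite_s2: "finite (UNIV :: s2 set)"
proof -
  have h: "(UNIV :: s2 set) = {Minus, Zero, Plus}" using s2.exhaust by blast
  have "finite {Minus, Zero, Plus}" by simp
  then show ?thesis unfolding h[symmetric] .
qed

lemma finite_S2n: "finite (S2n n)"
proof -
  have e: "(x \<notin> {1..n}) \<longleftrightarrow> (x = 0 \<or> n < x)" for x :: nat by auto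
  have "S2n n = {f. \<forall>x. (x \<in> {1..n} \<longrightarrow> f x \<in> UNIV) \<and> (x \<notin> {1..n} \<longrightarrow> f x = Zero)}"
    unfolding S2n_def e by simp
  moreover have "finite {f. \<forall>x. (x \<in> {1..n} \<longrightarrow> f x \<in> UNIV) \<and> (x \<notin> {1..n} \<longrightarrow> f x = Zero)}"
    by (rule finite_set_of_finite_funs[OF _ finite_s2]) simp
  ultimately show ?thesis by simp
qed

lemma ball_img: "(\<forall>l\<in>f ` A. P l) \<longleftrightarrow> (\<forall>x\<in>A. P (f x))" by blast

lemma Max_ins0_mult:
  fixes S :: "real set"
  assumes "finite S" "0 \<le> \<sigma>" "0 \<le> y"
  shows "Max (insert 0 S) * \<sigma> \<le> y \<longleftrightarrow> (\<forall>l\<in>S. l * \<sigma> \<le> y)"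
proof
  assume h: "Max (insert 0 S) * \<sigma> \<le> y"
  show "\<forall>l\<in>S. l * \<sigma> \<le> y"
  proof
    fix l assume "l \<in> S"
    then have "l \<le> Max (insert 0 S)" using assms by simp
    then have "l * \<sigma> \<le> Max (insert 0 S) * \<sigma>" using assms by (simp add: mult_right_mono)
    then show "l * \<sigma> \<le> y" using h by simp
  qed
next
  assume h: "\<forall>l\<in>S. l * \<sigma> \<le> y"
  have "Max (insert 0 S) \<in> insert 0 S" using assms by (intro Max_in) auto
  then show "Max (insert 0 S) * \<sigma> \<le> y" using h assms by auto
qed

lemma Min_ins1_mult:
  fixes S :: "real set"
  assumes "finite S" "0 \<le> \<sigma>" "y \<le> \<sigma>"
  shows "y \<le> Min (insert 1 S) * \<sigma> \<longleftrightarrow> (\<forall>r\<in>S. y \<le> r * \<sigma>)"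
proof
  assume h: "y \<le> Min (insert 1 S) * \<sigma>"
  show "\<forall>r\<in>S. y \<le> r * \<sigma>"
  proof
    fix r assume "r \<in> S"
    then have "Min (insert 1 S) \<le> r" using assms by simp
    then have "Min (insert 1 S) * \<sigma> \<le> r * \<sigma>" using assms by (simp add: mult_right_mono)
    then show "y \<le> r * \<sigma>" using h by simp
  qed
next
  assume h: "\<forall>r\<in>S. y \<le> r * \<sigma>"
  have "Min (insert 1 S) \<in> insert 1 S" using assms by (intro Min_in) auto
  then show "y \<le> Min (insert 1 S) * \<sigma>" using h assms by auto
qed

lemma convex_unique_max:
  fixes w :: "'a::real_inner"
  shows "convex {z. w \<bullet> z \<le> c \<and> (w \<bullet> z = c \<longrightarrow> z = v)}"
  unfolding convex_def
proof (intro ballI allI impI)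
  fix x y and u v' :: real
  assume x: "x \<in> {z. w \<bullet> z \<le> c \<and> (w \<bullet> z = c \<longrightarrow> z = v)}" and y: "y \<in> {z. w \<bullet> z \<le> c \<and> (w \<bullet> z = c \<longrightarrow> z = v)}"
    and uv: "0 \<le> u" "0 \<le> v'" "u + v' = 1"
  have e: "w \<bullet> (u *\<^sub>R x + v' *\<^sub>R y) = u * (w \<bullet> x) + v' * (w \<bullet> y)"
    by (simp add: inner_add_right)
  have a: "u * (w \<bullet> x) \<le> u * c" "v' * (w \<bullet> y) \<le> v' * c" using x y uv by (auto intro: mult_left_mono)
  have le: "w \<bullet> (u *\<^sub>R x + v' *\<^sub>R y) \<le> c" using e a uv by (metis add_mono distrib_right mult_1)
  moreover have "u *\<^sub>R x + v' *\<^sub>R y = v" if eq: "w \<bullet> (u *\<^sub>R x + v' *\<^sub>R y) = c"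
  proof -
    have s: "u * (w \<bullet> x) + v' * (w \<bullet> y) = u * c + v' * c" using eq e uv by (metis distrib_right mult_1)
    have "u * (w \<bullet> x) = u * c" using s a by linarith
    moreover have "v' * (w \<bullet> y) = v' * c" using s a by linarith
    ultimately have "(u = 0 \<or> x = v) \<and> (v' = 0 \<or> y = v)" using x y by auto
    then show ?thesis using uv by (auto simp: scaleR_left_distrib[symmetric])
  qed
  ultimately show "u *\<^sub>R x + v' *\<^sub>R y \<in> {z. w \<bullet> z \<le> c \<and> (w \<bullet> z = c \<longrightarrow> z = v)}" by simp
qed

locale fjs =
  fixes n :: nat and \<alpha> :: "nat \<Rightarrow> real" and p q :: "nat \<Rightarrow> s2"
  assumes alpha0: "\<alpha> 0 = 0"
    and pos: "n \<ge> 1 \<Longrightarrow> 0 < \<alpha> 1"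
    and mono: "\<And>j. 1 \<le> j \<Longrightarrow> j < n \<Longrightarrow> \<alpha> j \<le> \<alpha> (Suc j)"
    and le1: "\<alpha> n \<le> 1"
    and p: "p \<in> S2n n" and q: "q \<in> S2n n"
begin

lemma amono: "i \<le> j \<Longrightarrow> j \<le> n \<Longrightarrow> \<alpha> i \<le> \<alpha> j"
proof (induction j rule: dec_induct)
  case base then show ?case by simp
next
  case (step k)
  have "\<alpha> k \<le> \<alpha> (Suc k)"
  proof (cases "k = 0")
    case True then show ?thesis using pos alpha0 step by simp
  next
    case False then show ?thesis using mono step by simp
  qed
  then show ?case using step by simp
qed

lemma apos: "j \<in> {1..n} \<Longrightarrow> 0 < \<alpha> j"
  using amono[of 1 j] pos by auto

lemma ale1: "j \<le> n \<Longrightarrow> \<alpha> j \<le> 1"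
  using amono[of j n] le1 by auto

lemma anonneg: "j \<le> n \<Longrightarrow> 0 \<le> \<alpha> j"
  using amono[of 0 j] alpha0 by auto

definition a :: "nat \<Rightarrow> real" where "a j = \<alpha> j / (1 + \<alpha> j)"

abbreviation I where "I \<equiv> interval n p q"
abbreviation F where "F u \<equiv> vpt n \<alpha> u p q"

definition Lx where "Lx x = Max (insert 0 ((\<lambda>j. fst (lr (a j) (p j) (q j) (x j))) ` {1..n}))"
definition Rx where "Rx x = Min (insert 1 ((\<lambda>j. snd (lr (a j) (p j) (q j) (x j))) ` {1..n}))"

lemma I_char: "I = {u \<in> S2n n. \<forall>j\<in>{1..n}. u j \<in> In1 (p j) (q j)}"
  by (rule interval_char[OF p q])

lemma finite_I: "finite I"
  using finite_S2n I_char by (metis (no_types, lifting) finite_subset mem_Collect_eq subsetI)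

lemma Lx_nonneg: "0 \<le> Lx x" unfolding Lx_def by (intro Max_ge) auto
lemma Rx_le1: "Rx x \<le> 1" unfolding Rx_def by (intro Min_le) auto
lemma Lx_ge: "j \<in> {1..n} \<Longrightarrow> fst (lr (a j) (p j) (q j) (x j)) \<le> Lx x"
  unfolding Lx_def by (intro Max_ge) auto
lemma Rx_le: "j \<in> {1..n} \<Longrightarrow> Rx x \<le> snd (lr (a j) (p j) (q j) (x j))"
  unfolding Rx_def by (intro Min_le) auto

lemma sep_coord:
  assumes x: "x \<in> I"
  shows "(\<forall>u\<in>I. w \<bullet> F u \<le> w \<bullet> F x) \<longleftrightarrow>
    (\<forall>j\<in>{1..n}. \<forall>c\<in>In1 (p j) (q j). hc \<alpha> j w (p j) (q j) c \<le> hc \<alpha> j w (p j) (q j) (x j))"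
proof
  assume h: "\<forall>u\<in>I. w \<bullet> F u \<le> w \<bullet> F x"
  show "\<forall>j\<in>{1..n}. \<forall>c\<in>In1 (p j) (q j). hc \<alpha> j w (p j) (q j) c \<le> hc \<alpha> j w (p j) (q j) (x j)"
  proof (intro ballI)
    fix j c assume j: "j \<in> {1..n}" and c: "c \<in> In1 (p j) (q j)"
    define u where "u = x(j := c)"
    have uI: "u \<in> I" using x j c unfolding I_char u_def by (auto simp: S2n_def)
    have "(\<Sum>k=1..n. hc \<alpha> k w (p k) (q k) (u k)) + hc \<alpha> j w (p j) (q j) (x j)
        = (\<Sum>k=1..n. hc \<alpha> k w (p k) (q k) (x k)) + hc \<alpha> j w (p j) (q j) (u j)"
      using j by (intro sum_swap1) (auto simp: u_def)
    moreover have "(\<Sum>k=1..n. hc \<alpha> k w (p k) (q k) (u k)) \<le> (\<Sum>k=1..n. hc \<alpha> k w (p k) (q k) (x k))"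
      using h uI by (simp add: inner_vpt)
    ultimately show "hc \<alpha> j w (p j) (q j) c \<le> hc \<alpha> j w (p j) (q j) (x j)" by (simp add: u_def)
  qed
next
  assume h: "\<forall>j\<in>{1..n}. \<forall>c\<in>In1 (p j) (q j). hc \<alpha> j w (p j) (q j) c \<le> hc \<alpha> j w (p j) (q j) (x j)"
  show "\<forall>u\<in>I. w \<bullet> F u \<le> w \<bullet> F x"
  proof
    fix u assume "u \<in> I"
    then have uj: "\<forall>j\<in>{1..n}. u j \<in> In1 (p j) (q j)" by (simp add: I_char)
    show "w \<bullet> F u \<le> w \<bullet> F x" unfolding inner_vpt
      by (rule sum_mono) (use h uj in blast)
  qed
qed

lemma cone_cond:
  assumes x: "x \<in> I" and w: "0 \<le> fst w" "0 \<le> snd w"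
  shows "(\<forall>u\<in>I. w \<bullet> F u \<le> w \<bullet> F x) \<longleftrightarrow>
     Lx x * (fst w + snd w) \<le> snd w \<and> snd w \<le> Rx x * (fst w + snd w)"
proof -
  have xj: "x j \<in> In1 (p j) (q j)" if "j \<in> {1..n}" for j using x that I_char by auto
  have eq: "(\<forall>c\<in>In1 (p j) (q j). hc \<alpha> j w (p j) (q j) c \<le> hc \<alpha> j w (p j) (q j) (x j)) \<longleftrightarrow>
     (fst (lr (a j) (p j) (q j) (x j)) * (fst w + snd w) \<le> snd w \<and>
          snd w \<le> snd (lr (a j) (p j) (q j) (x j)) * (fst w + snd w))" if j: "j \<in> {1..n}" for j
  proof -
    have "\<alpha> j \<le> 1" using j ale1 by auto
    then show ?thesis unfolding a_def by (rule coord_weak[of \<alpha> j w "x j" "p j" "q j", OF apos[OF j] _ w xj[OF j]])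
  qed
  have m1: "Lx x * (fst w + snd w) \<le> snd w \<longleftrightarrow> (\<forall>j\<in>{1..n}. fst (lr (a j) (p j) (q j) (x j)) * (fst w + snd w) \<le> snd w)"
  proof -
    have "Lx x * (fst w + snd w) \<le> snd w \<longleftrightarrow> (\<forall>l\<in>(\<lambda>j. fst (lr (a j) (p j) (q j) (x j))) ` {1..n}. l * (fst w + snd w) \<le> snd w)"
      unfolding Lx_def by (rule Max_ins0_mult) (use w in simp_all)
    then show ?thesis unfolding ball_img .
  qed
  have m2: "snd w \<le> Rx x * (fst w + snd w) \<longleftrightarrow> (\<forall>j\<in>{1..n}. snd w \<le> snd (lr (a j) (p j) (q j) (x j)) * (fst w + snd w))"
  proof -
    have "snd w \<le> Rx x * (fst w + snd w) \<longleftrightarrow> (\<forall>l\<in>(\<lambda>j. snd (lr (a j) (p j) (q j) (x j))) ` {1..n}. snd w \<le> l * (fst w + snd w))"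
      unfolding Rx_def by (rule Min_ins1_mult) (use w in simp_all)
    then show ?thesis unfolding ball_img .
  qed
  have "(\<forall>j\<in>{1..n}. \<forall>c\<in>In1 (p j) (q j). hc \<alpha> j w (p j) (q j) c \<le> hc \<alpha> j w (p j) (q j) (x j)) \<longleftrightarrow>
     (\<forall>j\<in>{1..n}. (fst (lr (a j) (p j) (q j) (x j)) * (fst w + snd w) \<le> snd w \<and>
          snd w \<le> snd (lr (a j) (p j) (q j) (x j)) * (fst w + snd w)))"
    by (rule ball_cong[OF refl eq])
  then show ?thesis unfolding sep_coord[OF x] m1 m2 ball_conj_distrib .
qed

lemma hull_bound:
  assumes "\<forall>u\<in>I. w \<bullet> F u \<le> M" "z \<in> convI n \<alpha> p q"
  shows "w \<bullet> z \<le> M"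
proof -
  have "convI n \<alpha> p q \<subseteq> {z. w \<bullet> z \<le> M}"
    unfolding convI_def using assms(1) by (intro hull_minimal) (auto simp: convex_halfspace_le)
  then show ?thesis using assms(2) by auto
qed

lemma F_in_convI: "x \<in> I \<Longrightarrow> F x \<in> convI n \<alpha> p q"
  unfolding convI_def by (intro hull_inc) auto

lemma SUP_cond:
  assumes x: "x \<in> I"
  shows "w \<bullet> F x = (SUP z\<in>convI n \<alpha> p q. w \<bullet> z) \<longleftrightarrow> (\<forall>u\<in>I. w \<bullet> F u \<le> w \<bullet> F x)"
proof
  assume h: "w \<bullet> F x = (SUP z\<in>convI n \<alpha> p q. w \<bullet> z)"
  define M where "M = Max ((\<lambda>u. w \<bullet> F u) ` I)"
  have "\<forall>u\<in>I. w \<bullet> F u \<le> M" unfolding M_def using finite_I by auto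
  then have "\<forall>z\<in>convI n \<alpha> p q. w \<bullet> z \<le> M" using hull_bound by blast
  then have "bdd_above ((\<lambda>z. w \<bullet> z) ` convI n \<alpha> p q)"
    by (intro bdd_aboveI2[where M=M]) auto
  then show "\<forall>u\<in>I. w \<bullet> F u \<le> w \<bullet> F x"
    unfolding h by (auto intro!: cSUP_upper F_in_convI)
next
  assume h: "\<forall>u\<in>I. w \<bullet> F u \<le> w \<bullet> F x"
  show "w \<bullet> F x = (SUP z\<in>convI n \<alpha> p q. w \<bullet> z)"
  proof -
    have "\<forall>z\<in>convI n \<alpha> p q. w \<bullet> z \<le> w \<bullet> F x" using hull_bound h by blast
    then show ?thesis by (intro cSup_eq_maximum[symmetric]) (use F_in_convI[OF x] in auto)
  qed
qed

lemma cone_eq: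
  assumes x: "x \<in> I"
  shows "cone n \<alpha> x p q = {(w1, w2). 0 \<le> w1 \<and> 0 \<le> w2 \<and> Lx x * (w1 + w2) \<le> w2 \<and> w2 \<le> Rx x * (w1 + w2)}"
proof (intro set_eqI)
  fix w :: "real \<times> real"
  obtain w1 w2 where ww: "w = (w1, w2)" by (cases w)
  show "w \<in> cone n \<alpha> x p q \<longleftrightarrow> w \<in> {(w1, w2). 0 \<le> w1 \<and> 0 \<le> w2 \<and> Lx x * (w1 + w2) \<le> w2 \<and> w2 \<le> Rx x * (w1 + w2)}"
  proof -
    have "w \<in> cone n \<alpha> x p q \<longleftrightarrow> 0 \<le> w1 \<and> 0 \<le> w2 \<and> (\<forall>u\<in>I. w \<bullet> F u \<le> w \<bullet> F x)"
      using SUP_cond[OF x, of w] unfolding cone_def ww by simp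
    also have "\<dots> \<longleftrightarrow> 0 \<le> w1 \<and> 0 \<le> w2 \<and> Lx x * (w1 + w2) \<le> w2 \<and> w2 \<le> Rx x * (w1 + w2)"
      using cone_cond[OF x, of w] unfolding ww by auto
    finally show ?thesis unfolding ww by simp
  qed
qed

end


definition hth :: "real \<Rightarrow> real" where "hth t = sin t / (sin t + cos t)"

lemma trig_pos:
  assumes "0 \<le> t" "t \<le> pi/2"
  shows "0 \<le> sin t" "0 \<le> cos t" "0 < sin t + cos t"
proof -
  show s: "0 \<le> sin t" using assms by (intro sin_ge_zero) auto
  show c: "0 \<le> cos t" using assms by (intro cos_ge_zero) auto
  show "0 < sin t + cos t"
  proof (cases "t < pi/2")
    case True
    then have "0 < cos t" using assms by (intro cos_gt_zero_pi) auto
    then show ?thesis using s by simp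
  next
    case False
    then have e: "t = pi/2" using assms by simp
    show ?thesis unfolding e by simp
  qed
qed

lemma hth_key1:
  assumes "0 \<le> t" "t \<le> pi/2"
  shows "y * cos t \<le> x * sin t \<longleftrightarrow> y \<le> hth t * (x + y)"
proof -
  have S: "0 < sin t + cos t" using trig_pos[OF assms] by simp
  have "y \<le> hth t * (x + y) \<longleftrightarrow> y * (sin t + cos t) \<le> sin t * (x + y)"
    unfolding hth_def using S by (simp add: field_simps)
  also have "\<dots> \<longleftrightarrow> y * cos t \<le> x * sin t" by (simp add: algebra_simps)
  finally show ?thesis by simp
qed

lemma hth_key2:
  assumes "0 \<le> t" "t \<le> pi/2"
  shows "y * cos t \<ge> x * sin t \<longleftrightarrow> y \<ge> hth t * (x + y)"
proof -
  have S: "0 < sin t + cos t" using trig_pos[OF assms] by simp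
  have "y \<ge> hth t * (x + y) \<longleftrightarrow> y * (sin t + cos t) \<ge> sin t * (x + y)"
    unfolding hth_def using S by (simp add: field_simps)
  also have "\<dots> \<longleftrightarrow> y * cos t \<ge> x * sin t" by (simp add: algebra_simps)
  finally show ?thesis by simp
qed

lemma hth_range:
  assumes "0 \<le> t" "t \<le> pi/2"
  shows "0 \<le> hth t" "hth t \<le> 1"
proof -
  have S: "0 < sin t + cos t" and s: "0 \<le> sin t" and c: "0 \<le> cos t" using trig_pos[OF assms] by auto
  show "0 \<le> hth t" unfolding hth_def using S s by (intro divide_nonneg_pos)
  show "hth t \<le> 1" unfolding hth_def using S c by (subst pos_divide_le_eq) auto
qed

lemma hth_mono:
  assumes "0 \<le> t1" "t1 \<le> t2" "t2 \<le> pi/2"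
  shows "hth t1 \<le> hth t2"
proof -
  have S1: "0 < sin t1 + cos t1" and S2: "0 < sin t2 + cos t2" using trig_pos assms by auto
  have "0 \<le> sin (t2 - t1)" using assms by (intro sin_ge_zero) auto
  then have "sin t1 * cos t2 \<le> sin t2 * cos t1" by (simp add: sin_diff algebra_simps)
  then have "sin t1 * (sin t2 + cos t2) \<le> sin t2 * (sin t1 + cos t1)" by (simp add: algebra_simps)
  then show ?thesis unfolding hth_def using S1 S2 by (simp add: divide_simps)
qed

lemma hth_surj:
  assumes "0 \<le> s" "s \<le> 1"
  shows "\<exists>t. 0 \<le> t \<and> t \<le> pi/2 \<and> hth t = s"
proof -
  have "continuous_on {0..pi/2} hth"
  proof -
    have "\<forall>t\<in>{0..pi/2}. sin t + cos t \<noteq> 0" using trig_pos by fastforce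
    then show ?thesis unfolding hth_def
      by (intro continuous_on_divide continuous_intros)
  qed
  moreover have "hth 0 = 0" "hth (pi/2) = 1" by (simp_all add: hth_def)
  ultimately show ?thesis using IVT'[of hth 0 s "pi/2"] assms by auto
qed

lemma cone_measure_eq:
  assumes L: "0 \<le> L" "L \<le> R" "R \<le> 1"
  shows "cone_measure {(w1, w2). 0 \<le> w1 \<and> 0 \<le> w2 \<and> L * (w1 + w2) \<le> w2 \<and> w2 \<le> R * (w1 + w2)} = R - L"
proof -
  define C where "C = {(w1, w2). 0 \<le> w1 \<and> 0 \<le> w2 \<and> L * (w1 + w2) \<le> w2 \<and> w2 \<le> R * (w1 + w2)}"
  define Q where "Q = (\<lambda>a b::real. {(x, y). 0 \<le> x \<and> 0 \<le> y \<and> y * cos a \<le> x * sin a \<and> y * cos b \<ge> x * sin b})"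
  have Qeq: "Q a b = {(x, y). 0 \<le> x \<and> 0 \<le> y \<and> hth b * (x + y) \<le> y \<and> y \<le> hth a * (x + y)}"
    if "0 \<le> b" "b \<le> a" "a \<le> pi/2" for a b
  proof (intro set_eqI)
    fix z :: "real \<times> real"
    obtain x y where z: "z = (x, y)" by (cases z)
    have k1: "y * cos a \<le> x * sin a \<longleftrightarrow> y \<le> hth a * (x + y)" using that by (intro hth_key1) auto
    have k2: "y * cos b \<ge> x * sin b \<longleftrightarrow> y \<ge> hth b * (x + y)" using that by (intro hth_key2) auto
    show "z \<in> Q a b \<longleftrightarrow> z \<in> {(x, y). 0 \<le> x \<and> 0 \<le> y \<and> hth b * (x + y) \<le> y \<and> y \<le> hth a * (x + y)}"
      unfolding z Q_def mem_Collect_eq case_prod_conv k1 k2 by blast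
  qed
  obtain ta where ta: "0 \<le> ta" "ta \<le> pi/2" "hth ta = R" using hth_surj[of R] L by auto
  obtain tb where tb: "0 \<le> tb" "tb \<le> ta" "hth tb = L"
  proof (cases "L = R")
    case True then show ?thesis using that ta by auto
  next
    case False
    obtain t where t: "0 \<le> t" "t \<le> pi/2" "hth t = L" using hth_surj[of L] L by auto
    have "t \<le> ta"
    proof (rule ccontr)
      assume "\<not> t \<le> ta"
      then have "hth ta \<le> hth t" using ta t by (intro hth_mono) auto
      then show False using ta t False L by simp
    qed
    then show ?thesis using that t by auto
  qed
  have memC: "(1 - s, s) \<in> C \<longleftrightarrow> L \<le> s \<and> s \<le> R" if "0 \<le> s" "s \<le> 1" for s
    unfolding C_def using that by simp
  have ex: "\<exists>a b. 0 \<le> b \<and> b \<le> a \<and> a \<le> pi / 2 \<and> C = Q a b \<and> R - L = hth a - hth b"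
  proof -
    have "C = Q ta tb" unfolding Qeq[OF tb(1) tb(2) ta(2)] ta(3) tb(3) C_def ..
    moreover have "R - L = hth ta - hth tb" using ta(3) tb(3) by simp
    moreover have "0 \<le> tb" "tb \<le> ta" "ta \<le> pi / 2" using ta tb by simp_all
    ultimately show ?thesis by blast
  qed
  have uniq: "m = R - L" if hm: "\<exists>a b. 0 \<le> b \<and> b \<le> a \<and> a \<le> pi / 2 \<and> C = Q a b \<and> m = hth a - hth b" for m
  proof -
    obtain a b where ab: "0 \<le> b" "b \<le> a" "a \<le> pi / 2" "C = Q a b" "m = hth a - hth b" using hm by metis
    have hb: "0 \<le> hth b" "hth b \<le> 1" using hth_range[of b] ab by auto
    have ha: "0 \<le> hth a" "hth a \<le> 1" using hth_range[of a] ab by auto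
    have hab: "hth b \<le> hth a" using ab by (intro hth_mono) auto
    have memQ: "(1 - s, s) \<in> Q a b \<longleftrightarrow> hth b \<le> s \<and> s \<le> hth a" if "0 \<le> s" "s \<le> 1" for s
      unfolding Qeq[OF ab(1-3)] using that by simp
    have i: "L \<le> s \<and> s \<le> R \<longleftrightarrow> hth b \<le> s \<and> s \<le> hth a" if "0 \<le> s" "s \<le> 1" for s
      using memC[OF that] memQ[OF that] ab(4) by simp
    have "hth a = R" using i[of R] i[of "hth a"] L ha hab by auto
    moreover have "hth b = L" using i[of L] i[of "hth b"] L hb hab by auto
    ultimately show ?thesis using ab by simp
  qed
  have ex': "\<exists>a b. 0 \<le> b \<and> b \<le> a \<and> a \<le> pi / 2 \<and>
      C = {(x, y). 0 \<le> x \<and> 0 \<le> y \<and> y * cos a \<le> x * sin a \<and> y * cos b \<ge> x * sin b} \<and>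
      R - L = sin a / (sin a + cos a) - sin b / (sin b + cos b)"
    using ex unfolding Q_def hth_def .
  have uniq': "m = R - L" if "\<exists>a b. 0 \<le> b \<and> b \<le> a \<and> a \<le> pi / 2 \<and>
      C = {(x, y). 0 \<le> x \<and> 0 \<le> y \<and> y * cos a \<le> x * sin a \<and> y * cos b \<ge> x * sin b} \<and>
      m = sin a / (sin a + cos a) - sin b / (sin b + cos b)" for m
  proof -
    from that obtain a b where ab: "0 \<le> b \<and> b \<le> a \<and> a \<le> pi / 2 \<and>
      C = {(x, y). 0 \<le> x \<and> 0 \<le> y \<and> y * cos a \<le> x * sin a \<and> y * cos b \<ge> x * sin b} \<and>
      m = sin a / (sin a + cos a) - sin b / (sin b + cos b)" by iprover
    have "\<exists>a b. 0 \<le> b \<and> b \<le> a \<and> a \<le> pi / 2 \<and> C = Q a b \<and> m = hth a - hth b"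
      unfolding Q_def hth_def using ab by iprover
    then show ?thesis by (rule uniq)
  qed
  have "cone_measure C = R - L"
    unfolding cone_measure_def by (rule the_equality, rule ex', rule uniq', assumption)
  then show ?thesis unfolding C_def .
qed


lemma ip2: "(w::real\<times>real) \<bullet> z = fst w * fst z + snd w * snd z"
  by (simp add: inner_prod_def)

context fjs begin

lemma xj_In1: "x \<in> I \<Longrightarrow> j \<in> {1..n} \<Longrightarrow> x j \<in> In1 (p j) (q j)"
  unfolding I_char by blast

lemma I_S2n: "x \<in> I \<Longrightarrow> x \<in> S2n n"
  unfolding I_char by blast

lemma eq_on_range:
  assumes "u \<in> S2n n" "x \<in> S2n n" "\<And>j. j \<in> {1..n} \<Longrightarrow> u j = x j"
  shows "u = x"
proof
  fix j show "u j = x j"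
  proof (cases "j \<in> {1..n}")
    case True then show ?thesis using assms(3) by blast
  next
    case False then show ?thesis using S2n_out assms(1,2) by metis
  qed
qed

lemma F2:
  assumes x: "x \<in> I" and lt: "Lx x < Rx x"
  shows "x \<in> Eset n \<alpha> p q"
proof -
  define s where "s = (Lx x + Rx x)/2"
  have s0: "0 < s" using Lx_nonneg[of x] lt unfolding s_def by (simp add: field_simps)
  have s1: "s < 1" using Rx_le1[of x] lt unfolding s_def by (simp add: field_simps)
  have sl: "Lx x < s" "s < Rx x" using lt unfolding s_def by (simp add: field_simps)+
  define w :: "real \<times> real" where "w = (1 - s, s)"
  have cs: "hc \<alpha> j w (p j) (q j) c < hc \<alpha> j w (p j) (q j) (x j)"
    if j: "j \<in> {1..n}" and c: "c \<in> In1 (p j) (q j)" "c \<noteq> x j" for j c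
  proof -
    have a1: "\<alpha> j \<le> 1" using j ale1 by simp
    have l: "fst (lr (\<alpha> j/(1+\<alpha> j)) (p j) (q j) (x j)) < s"
      using Lx_ge[OF j, of x] sl unfolding a_def by linarith
    have r: "s < snd (lr (\<alpha> j/(1+\<alpha> j)) (p j) (q j) (x j))"
      using Rx_le[OF j, of x] sl unfolding a_def by linarith
    show ?thesis unfolding w_def
      by (rule coord_strict[of \<alpha> j, OF apos[OF j] a1 s0 s1 xj_In1[OF x j] l r c])
  qed
  have strict: "w \<bullet> F u < w \<bullet> F x" if u: "u \<in> I" "u \<noteq> x" for u
  proof -
    obtain j where j: "j \<in> {1..n}" "u j \<noteq> x j"
      using eq_on_range[OF I_S2n[OF u(1)] I_S2n[OF x]] u(2) by blast
    have le: "hc \<alpha> k w (p k) (q k) (u k) \<le> hc \<alpha> k w (p k) (q k) (x k)" if k: "k \<in> {1..n}" for k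
    proof (cases "u k = x k")
      case True then show ?thesis by simp
    next
      case False then show ?thesis using cs[OF k xj_In1[OF u(1) k]] by simp
    qed
    show ?thesis unfolding inner_vpt
      by (rule sum_strict_mono_ex1) (use le cs[OF j(1) xj_In1[OF u(1) j(1)] j(2)] j(1) in auto)
  qed
  define c where "c = w \<bullet> F x"
  have T: "convI n \<alpha> p q \<subseteq> {z. w \<bullet> z \<le> c \<and> (w \<bullet> z = c \<longrightarrow> z = F x)}"
    unfolding convI_def
  proof (rule hull_minimal)
    show "convex {z. w \<bullet> z \<le> c \<and> (w \<bullet> z = c \<longrightarrow> z = F x)}" by (rule convex_unique_max)
    show "(\<lambda>u. F u) ` I \<subseteq> {z. w \<bullet> z \<le> c \<and> (w \<bullet> z = c \<longrightarrow> z = F x)}"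
    proof
      fix z assume "z \<in> (\<lambda>u. F u) ` I"
      then obtain u where u: "u \<in> I" "z = F u" by blast
      show "z \<in> {z. w \<bullet> z \<le> c \<and> (w \<bullet> z = c \<longrightarrow> z = F x)}"
      proof (cases "u = x")
        case True then show ?thesis using u by (simp add: c_def)
      next
        case False then have "w \<bullet> z < c" using strict[OF u(1)] u(2) by (simp add: c_def)
        then show ?thesis by simp
      qed
    qed
  qed
  have Tz: "w \<bullet> z \<le> c" "w \<bullet> z = c \<Longrightarrow> z = F x" if "z \<in> convI n \<alpha> p q" for z
    using T that by blast+
  have ext: "F x extreme_point_of convI n \<alpha> p q"
    unfolding extreme_point_of_def
  proof (intro conjI ballI)
    show "F x \<in> convI n \<alpha> p q" by (rule F_in_convI[OF x])
    fix a' b' assume a': "a' \<in> convI n \<alpha> p q" and b': "b' \<in> convI n \<alpha> p q"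
    show "F x \<notin> open_segment a' b'"
    proof
      assume "F x \<in> open_segment a' b'"
      then obtain t where ab: "a' \<noteq> b'" "0 < t" "t < 1" "F x = (1 - t) *\<^sub>R a' + t *\<^sub>R b'"
        unfolding in_segment(2) by blast
      have e: "c = (1 - t) * (w \<bullet> a') + t * (w \<bullet> b')"
        unfolding c_def ab(4) by (simp add: inner_add_right)
      have ha: "w \<bullet> a' \<le> c" and hb: "w \<bullet> b' \<le> c" using Tz a' b' by auto
      have "(1 - t) * (w \<bullet> a') \<le> (1 - t) * c" using ha ab by (intro mult_left_mono) auto
      moreover have "t * (w \<bullet> b') \<le> t * c" using hb ab by (intro mult_left_mono) auto
      moreover have "(1 - t) * c + t * c = c" by (simp add: algebra_simps)
      ultimately have e1: "(1 - t) * (w \<bullet> a') = (1 - t) * c" and e2: "t * (w \<bullet> b') = t * c"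
        using e by linarith+
      have "w \<bullet> a' = c" using e1 ab(3) by simp
      moreover have "w \<bullet> b' = c" using e2 ab(2) by simp
      ultimately have "w \<bullet> a' = c" "w \<bullet> b' = c" by simp_all
      then have "a' = F x" "b' = F x" using Tz(2)[OF a'] Tz(2)[OF b'] by simp_all
      then show False using ab(1) by simp
    qed
  qed
  have par: "\<forall>z\<in>convI n \<alpha> p q. fst (F x) \<le> fst z \<and> snd (F x) \<le> snd z \<longrightarrow> z = F x"
  proof (intro ballI impI)
    fix z assume z: "z \<in> convI n \<alpha> p q" and le: "fst (F x) \<le> fst z \<and> snd (F x) \<le> snd z"
    have "(1 - s) * fst (F x) \<le> (1 - s) * fst z" using le s1 by (intro mult_left_mono) auto
    moreover have "s * snd (F x) \<le> s * snd z" using le s0 by (intro mult_left_mono) auto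
    ultimately have "c \<le> w \<bullet> z" unfolding c_def w_def ip2 by simp
    then have "w \<bullet> z = c" using Tz(1)[OF z] by simp
    then show "z = F x" using Tz(2)[OF z] by simp
  qed
  show ?thesis unfolding Eset_def using x ext par by blast
qed


lemma F3:
  assumes xE: "x \<in> Eset n \<alpha> p q"
  shows "Lx x \<le> Rx x"
proof -
  have x: "x \<in> I" and par: "\<forall>z\<in>convI n \<alpha> p q. fst (F x) \<le> fst z \<and> snd (F x) \<le> snd z \<longrightarrow> z = F x"
    using xE unfolding Eset_def by blast+
  define v where "v = F x"
  define T where "T = {z::real\<times>real. fst v < fst z \<and> snd v < snd z}"
  have cT: "convex T"
  proof -
    have "T = {z. inner (1::real, 0::real) z > fst v} \<inter> {z. inner (0::real, 1::real) z > snd v}"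
      unfolding T_def by (auto simp: ip2)
    then show ?thesis by (simp add: convex_Int convex_halfspace_gt)
  qed
  have neT: "T \<noteq> {}"
  proof -
    have "(fst v + 1, snd v + 1) \<in> T" unfolding T_def by simp
    then show ?thesis by blast
  qed
  have vS: "v \<in> convI n \<alpha> p q" using F_in_convI[OF x] unfolding v_def .
  have neS: "convI n \<alpha> p q \<noteq> {}" using vS by blast
  have dis: "convI n \<alpha> p q \<inter> T = {}"
  proof (rule ccontr)
    assume "convI n \<alpha> p q \<inter> T \<noteq> {}"
    then obtain z where z: "z \<in> convI n \<alpha> p q" "z \<in> T" by blast
    then have "fst v < fst z" "snd v < snd z" unfolding T_def by auto
    then have "z = v" using par z(1) unfolding v_def by auto
    then show False using \<open>fst v < fst z\<close> by simp
  qed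
  have cS: "convex (convI n \<alpha> p q)" unfolding convI_def by (rule convex_convex_hull)
  obtain aa b where ab: "aa \<noteq> 0" "\<forall>z\<in>convI n \<alpha> p q. aa \<bullet> z \<le> b" "\<forall>z\<in>T. b \<le> aa \<bullet> z"
    using separating_hyperplane_sets[OF cS cT neS neT dis] by blast
  have va: "aa \<bullet> v \<le> b" using ab(2) vS by blast
  have Tpt: "b \<le> aa \<bullet> v + fst aa * d + snd aa * e" if "0 < d" "0 < e" for d e
  proof -
    have "(fst v + d, snd v + e) \<in> T" unfolding T_def using that by simp
    then have "b \<le> aa \<bullet> (fst v + d, snd v + e)" using ab(3) by blast
    also have "aa \<bullet> (fst v + d, snd v + e) = aa \<bullet> v + fst aa * d + snd aa * e"
      unfolding ip2 by (simp add: algebra_simps)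
    finally show ?thesis .
  qed
  have a1: "0 \<le> fst aa"
  proof (rule ccontr)
    assume h: "\<not> 0 \<le> fst aa"
    define d where "d = (\<bar>snd aa\<bar> + 1) / (- fst aa)"
    have d0: "0 < d" unfolding d_def using h by (intro divide_pos_pos) auto
    have "fst aa * d = - (\<bar>snd aa\<bar> + 1)" unfolding d_def using h by (simp add: field_simps)
    then show False using Tpt[OF d0, of 1] va by (smt (verit) abs_ge_self)
  qed
  have a2: "0 \<le> snd aa"
  proof (rule ccontr)
    assume h: "\<not> 0 \<le> snd aa"
    define e where "e = (\<bar>fst aa\<bar> + 1) / (- snd aa)"
    have e0: "0 < e" unfolding e_def using h by (intro divide_pos_pos) auto
    have "snd aa * e = - (\<bar>fst aa\<bar> + 1)" unfolding e_def using h by (simp add: field_simps)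
    then show False using Tpt[OF _ e0, of 1] va by (smt (verit) abs_ge_self)
  qed
  have sig: "0 < fst aa + snd aa"
  proof (rule ccontr)
    assume "\<not> 0 < fst aa + snd aa"
    then have "fst aa = 0" "snd aa = 0" using a1 a2 by linarith+
    then have "aa = 0" by (simp add: prod_eq_iff)
    then show False using ab(1) by simp
  qed
  have bv: "b \<le> aa \<bullet> v"
  proof (rule ccontr)
    assume h: "\<not> b \<le> aa \<bullet> v"
    define d where "d = (b - aa \<bullet> v) / (2 * (fst aa + snd aa))"
    have d0: "0 < d" unfolding d_def using h sig by (simp add: divide_pos_pos)
    define X where "X = b - aa \<bullet> v"
    define S where "S = fst aa + snd aa"
    have S0: "S \<noteq> 0" using sig unfolding S_def by simp
    have dd: "d = X / (2 * S)" unfolding d_def X_def S_def ..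
    have "fst aa * d + snd aa * d = S * d" unfolding S_def by (simp add: distrib_right)
    also have "\<dots> = S * (X / (2 * S))" unfolding dd ..
    also have "\<dots> = X / 2" using S0 by simp
    finally have "fst aa * d + snd aa * d = (b - aa \<bullet> v) / 2" unfolding X_def .
    then have "b \<le> aa \<bullet> v + (b - aa \<bullet> v) / 2" using Tpt[OF d0 d0] by (metis add.assoc)
    then show False using h by (simp add: field_simps)
  qed
  have all: "\<forall>u\<in>I. aa \<bullet> F u \<le> aa \<bullet> F x"
  proof
    fix u assume "u \<in> I"
    then have "aa \<bullet> F u \<le> b" using ab(2) F_in_convI by blast
    then show "aa \<bullet> F u \<le> aa \<bullet> F x" using bv unfolding v_def by linarith
  qed
  have "Lx x * (fst aa + snd aa) \<le> snd aa \<and> snd aa \<le> Rx x * (fst aa + snd aa)"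
    using cone_cond[OF x a1 a2] all by blast
  then have "Lx x * (fst aa + snd aa) \<le> Rx x * (fst aa + snd aa)" by linarith
  then show ?thesis using sig by simp
qed

end


lemma s2_cases3: "c \<noteq> Zero \<Longrightarrow> c \<noteq> Plus \<Longrightarrow> c = Minus" by (cases c) auto

lemma jp_tab[simp]:
  "s2_join_plus Minus Minus = Minus" "s2_join_plus Minus Zero = Minus" "s2_join_plus Minus Plus = Plus"
  "s2_join_plus Zero Minus = Minus" "s2_join_plus Zero Zero = Zero" "s2_join_plus Zero Plus = Plus"
  "s2_join_plus Plus Minus = Plus" "s2_join_plus Plus Zero = Plus" "s2_join_plus Plus Plus = Plus"
  by (simp_all add: s2_join_plus_def s2_join_def s2_le_def doubleton_eq_iff)

lemma join_ZZ[simp]: "s2_join Zero Zero = Zero" by (simp add: s2_join_def s2_le_def)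

lemma vLR_tab[simp]:
  "s2_vL Minus Minus = Minus" "s2_vL Minus Zero = Minus" "s2_vL Minus Plus = Minus"
  "s2_vL Zero Minus = Minus" "s2_vL Zero Zero = Zero" "s2_vL Zero Plus = Plus"
  "s2_vL Plus Minus = Plus" "s2_vL Plus Zero = Plus" "s2_vL Plus Plus = Plus"
  "s2_vR Minus Minus = Minus" "s2_vR Minus Zero = Minus" "s2_vR Minus Plus = Plus"
  "s2_vR Zero Minus = Minus" "s2_vR Zero Zero = Zero" "s2_vR Zero Plus = Plus"
  "s2_vR Plus Minus = Minus" "s2_vR Plus Zero = Plus" "s2_vR Plus Plus = Plus"
  by (simp_all add: s2_vL_def s2_vR_def)

lemma jp_In1: "s2_join_plus a b \<in> In1 a b"
  by (cases a; cases b) (simp_all add: In1_def d1_def)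

lemma AB_In1: "(a = Minus \<and> b = Plus) \<or> (a = Plus \<and> b = Minus) \<Longrightarrow> c \<in> In1 a b"
  by (cases c) (auto simp: In1_def d1_def)

lemma vLR_nonAB:
  "\<not> (a = Minus \<and> b = Plus) \<Longrightarrow> \<not> (a = Plus \<and> b = Minus) \<Longrightarrow> s2_vL a b = s2_join_plus a b"
  "\<not> (a = Minus \<and> b = Plus) \<Longrightarrow> \<not> (a = Plus \<and> b = Minus) \<Longrightarrow> s2_vR a b = s2_join_plus a b"
  by (cases a; cases b; simp)+

lemma lr_good_coord:
  assumes "((a' = Minus \<and> b' = Plus) \<or> (a' = Plus \<and> b' = Minus)) \<longrightarrow> c \<noteq> Zero"
    and "\<not> ((a' = Minus \<and> b' = Plus) \<or> (a' = Plus \<and> b' = Minus)) \<longrightarrow> c = s2_join_plus a' b'"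
  shows "lr t a' b' c = (if a' = Minus \<and> b' = Plus then (if c = Plus then (t, 1) else (0, t))
      else if a' = Plus \<and> b' = Minus then (if c = Plus then (0, 1 - t) else (1 - t, 1)) else (0, 1))"
  using assms
  by (cases a'; cases b'; cases c) (simp_all add: lr_def)

lemma lr_bad_coord:
  assumes "c \<in> In1 a' b'"
    and "(((a' = Minus \<and> b' = Plus) \<or> (a' = Plus \<and> b' = Minus)) \<and> c = Zero) \<or>
         (\<not> ((a' = Minus \<and> b' = Plus) \<or> (a' = Plus \<and> b' = Minus)) \<and> c \<noteq> s2_join_plus a' b')"
  shows "snd (lr t a' b' c) \<le> fst (lr t a' b' c)"
  using assms
  by (cases a'; cases b'; cases c) (simp_all add: lr_def In1_def d1_def)

lemma tele:
  fixes f :: "nat \<Rightarrow> real"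
  assumes "m1 \<le> m2" "m2 \<le> N"
  shows "(\<Sum>i<N. if m1 \<le> i \<and> i < m2 then f (Suc i) - f i else 0) = f m2 - f m1"
proof -
  have "(\<Sum>i<N. if m1 \<le> i \<and> i < m2 then f (Suc i) - f i else 0) = (\<Sum>i\<in>{i\<in>{..<N}. m1 \<le> i \<and> i < m2}. f (Suc i) - f i)"
    by (rule sum.inter_filter[symmetric]) simp
  also have "{i\<in>{..<N}. m1 \<le> i \<and> i < m2} = {m1..<m2}" using assms by auto
  also have "(\<Sum>i = m1..<m2. f (Suc i) - f i) = f m2 - f m1" by (rule sum_Suc_diff'[OF assms(1)])
  finally show ?thesis .
qed

lemma tele0:
  fixes f :: "nat \<Rightarrow> real"
  assumes "m2 \<le> m1"
  shows "(\<Sum>i<N. if m1 \<le> i \<and> i < m2 then f (Suc i) - f i else 0) = 0"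
  using assms by (intro sum.neutral) auto

context fjs begin

definition Aj where "Aj j \<longleftrightarrow> p j = Minus \<and> q j = Plus"
definition Bj where "Bj j \<longleftrightarrow> p j = Plus \<and> q j = Minus"

definition good where "good x \<longleftrightarrow> x \<in> S2n n \<and> (\<forall>j\<in>{1..n}. ((Aj j \<or> Bj j) \<longrightarrow> x j \<noteq> Zero) \<and>
   (\<not> (Aj j \<or> Bj j) \<longrightarrow> x j = s2_join_plus (p j) (q j)))"

lemma good_I: assumes "good x" shows "x \<in> I"
  unfolding I_char
proof (intro CollectI conjI ballI)
  show "x \<in> S2n n" using assms unfolding good_def by blast
  fix j assume j: "j \<in> {1..n}"
  show "x j \<in> In1 (p j) (q j)"
  proof (cases "Aj j \<or> Bj j")
    case True then show ?thesis by (intro AB_In1) (auto simp: Aj_def Bj_def)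
  next
    case False then have "x j = s2_join_plus (p j) (q j)" using assms j unfolding good_def by blast
    then show ?thesis using jp_In1 by simp
  qed
qed

lemma pq0: "p 0 = Zero" "q 0 = Zero" using p q by (auto simp: S2n_def)
lemma pqn: "n < j \<Longrightarrow> p j = Zero" "n < j \<Longrightarrow> q j = Zero" using p q by (auto simp: S2n_def)

lemma vL_S2n: "i \<le> n \<Longrightarrow> vL_i i p q \<in> S2n n"
  unfolding S2n_def vL_i_def op_i_def using pq0 pqn by auto
lemma vR_S2n: "i \<le> n \<Longrightarrow> vR_i i p q \<in> S2n n"
  unfolding S2n_def vR_i_def op_i_def using pq0 pqn by auto
lemma J_S2n: "join_i n p q \<in> S2n n"
  unfolding S2n_def join_i_def op_i_def using pq0 pqn by auto

lemma vL_coord: "vL_i i p q j = (if j \<le> i then s2_join_plus (p j) (q j) else s2_vL (p j) (q j))"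
  by (simp add: vL_i_def op_i_def)
lemma vR_coord: "vR_i i p q j = (if j \<le> i then s2_join_plus (p j) (q j) else s2_vR (p j) (q j))"
  by (simp add: vR_i_def op_i_def)
lemma J_coord: "j \<le> n \<Longrightarrow> join_i n p q j = s2_join_plus (p j) (q j)"
  by (simp add: join_i_def op_i_def)

lemma vL_good: "i \<le> n \<Longrightarrow> good (vL_i i p q)"
  unfolding good_def using vL_S2n
  by (auto simp: vL_coord Aj_def Bj_def vLR_nonAB)
lemma vR_good: "i \<le> n \<Longrightarrow> good (vR_i i p q)"
  unfolding good_def using vR_S2n
  by (auto simp: vR_coord Aj_def Bj_def vLR_nonAB)
lemma J_good: "good (join_i n p q)"
  unfolding good_def using J_S2n
  by (auto simp: J_coord Aj_def Bj_def)


lemma a0: "a 0 = 0" by (simp add: a_def alpha0)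

lemma a_nonneg: "j \<le> n \<Longrightarrow> 0 \<le> a j"
  unfolding a_def using anonneg[of j] by simp

lemma a_mono: assumes "i \<le> j" "j \<le> n" shows "a i \<le> a j"
proof -
  have h: "\<alpha> i \<le> \<alpha> j" "0 \<le> \<alpha> i" "0 \<le> \<alpha> j" using amono[OF assms] anonneg assms by auto
  have "\<alpha> i * (1 + \<alpha> j) \<le> \<alpha> j * (1 + \<alpha> i)" using h by (simp add: algebra_simps)
  then show ?thesis unfolding a_def using h by (simp add: field_simps)
qed

lemma a_half: assumes "j \<le> n" shows "a j \<le> 1/2"
proof -
  have h: "\<alpha> j \<le> 1" "0 \<le> \<alpha> j" using ale1 anonneg assms by auto
  then show ?thesis unfolding a_def by (simp add: field_simps)
qed

lemma AB_excl: "Aj j \<Longrightarrow> \<not> Bj j" by (simp add: Aj_def Bj_def)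

lemma lr_good:
  assumes g: "good x" and j: "j \<in> {1..n}"
  shows "fst (lr (a j) (p j) (q j) (x j)) = (if Aj j \<and> x j = Plus then a j else if Bj j \<and> x j \<noteq> Plus then 1 - a j else 0)"
    "snd (lr (a j) (p j) (q j) (x j)) = (if Aj j \<and> x j \<noteq> Plus then a j else if Bj j \<and> x j = Plus then 1 - a j else 1)"
proof -
  have c1: "(Aj j \<or> Bj j) \<longrightarrow> x j \<noteq> Zero" and c2: "\<not> (Aj j \<or> Bj j) \<longrightarrow> x j = s2_join_plus (p j) (q j)"
    using g j unfolding good_def by blast+
  have e: "lr (a j) (p j) (q j) (x j) = (if Aj j then (if x j = Plus then (a j, 1) else (0, a j))
      else if Bj j then (if x j = Plus then (0, 1 - a j) else (1 - a j, 1)) else (0, 1))"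
    unfolding Aj_def Bj_def by (rule lr_good_coord) (use c1 c2 in \<open>simp_all add: Aj_def Bj_def\<close>)
  show "fst (lr (a j) (p j) (q j) (x j)) = (if Aj j \<and> x j = Plus then a j else if Bj j \<and> x j \<noteq> Plus then 1 - a j else 0)"
    unfolding e using AB_excl by auto
  show "snd (lr (a j) (p j) (q j) (x j)) = (if Aj j \<and> x j \<noteq> Plus then a j else if Bj j \<and> x j = Plus then 1 - a j else 1)"
    unfolding e using AB_excl by auto
qed

lemma Lx_eqI:
  assumes "\<And>j. j \<in> {1..n} \<Longrightarrow> fst (lr (a j) (p j) (q j) (x j)) \<le> m" "0 \<le> m"
    "m = 0 \<or> (\<exists>j\<in>{1..n}. fst (lr (a j) (p j) (q j) (x j)) = m)"
  shows "Lx x = m"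
  unfolding Lx_def by (rule Max_eqI) (use assms in auto)

lemma Rx_eqI:
  assumes "\<And>j. j \<in> {1..n} \<Longrightarrow> m \<le> snd (lr (a j) (p j) (q j) (x j))" "m \<le> 1"
    "m = 1 \<or> (\<exists>j\<in>{1..n}. snd (lr (a j) (p j) (q j) (x j)) = m)"
  shows "Rx x = m"
  unfolding Rx_def by (rule Min_eqI) (use assms in auto)

end

lemma Max0_props:
  fixes S :: "nat set"
  assumes "S \<subseteq> {1..n}"
  shows "Max (insert 0 S) \<le> n" "\<And>j. j \<in> S \<Longrightarrow> j \<le> Max (insert 0 S)"
    "S = {} \<Longrightarrow> Max (insert 0 S) = 0" "S \<noteq> {} \<Longrightarrow> Max (insert 0 S) \<in> S"
    "Max (insert 0 S) \<le> i \<longleftrightarrow> (\<forall>j\<in>S. j \<le> i)"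
proof -
  have f: "finite S" using assms finite_subset by blast
  show "Max (insert 0 S) \<le> n" using f assms by auto
  show "\<And>j. j \<in> S \<Longrightarrow> j \<le> Max (insert 0 S)" using f by auto
  show "S = {} \<Longrightarrow> Max (insert 0 S) = 0" by simp
  show "Max (insert 0 S) \<le> i \<longleftrightarrow> (\<forall>j\<in>S. j \<le> i)" using f by auto
  assume ne: "S \<noteq> {}"
  have "Max (insert 0 S) \<in> insert 0 S" using f by (intro Max_in) auto
  moreover have "Max (insert 0 S) \<noteq> 0"
  proof -
    obtain j where "j \<in> S" using ne by blast
    then have "1 \<le> j" "j \<le> Max (insert 0 S)" using assms f by auto
    then show ?thesis by simp
  qed
  ultimately show "Max (insert 0 S) \<in> S" by simp
qed

lemma Min_props:
  fixes S :: "nat set"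
  assumes "S \<subseteq> {1..n}" "S \<noteq> {}"
  shows "Min S \<in> S" "Min S \<le> n" "\<And>j. j \<in> S \<Longrightarrow> Min S \<le> j"
    "i < Min S \<longleftrightarrow> (\<forall>j\<in>S. i < j)"
proof -
  have f: "finite S" using assms finite_subset by blast
  show m: "Min S \<in> S" using f assms by (intro Min_in) auto
  then show "Min S \<le> n" using assms by auto
  show "\<And>j. j \<in> S \<Longrightarrow> Min S \<le> j" using f by auto
  show "i < Min S \<longleftrightarrow> (\<forall>j\<in>S. i < j)" using f assms by auto
qed


context fjs begin

lemma vL_eq:
  assumes g: "good x" and i: "i \<le> n"
  shows "x = vL_i i p q \<longleftrightarrow> (\<forall>j\<in>{1..n}. (Aj j \<longrightarrow> (x j = Plus \<longleftrightarrow> j \<le> i)) \<and> (Bj j \<longrightarrow> x j = Plus))"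
proof
  assume e: "x = vL_i i p q"
  show "\<forall>j\<in>{1..n}. (Aj j \<longrightarrow> (x j = Plus \<longleftrightarrow> j \<le> i)) \<and> (Bj j \<longrightarrow> x j = Plus)"
  proof (intro ballI conjI impI)
    fix j assume j: "j \<in> {1..n}"
    { assume "Aj j"
      then have "x j = (if j \<le> i then Plus else Minus)" unfolding e vL_coord Aj_def by simp
      then show "x j = Plus \<longleftrightarrow> j \<le> i" by simp }
    { assume "Bj j"
      then show "x j = Plus" unfolding e vL_coord Bj_def by simp }
  qed
next
  assume h: "\<forall>j\<in>{1..n}. (Aj j \<longrightarrow> (x j = Plus \<longleftrightarrow> j \<le> i)) \<and> (Bj j \<longrightarrow> x j = Plus)"
  have xS: "x \<in> S2n n" using g unfolding good_def by blast
  show "x = vL_i i p q"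
  proof (rule eq_on_range[OF xS vL_S2n[OF i]])
    fix j assume j: "j \<in> {1..n}"
    have c1: "(Aj j \<or> Bj j) \<longrightarrow> x j \<noteq> Zero" and c2: "\<not> (Aj j \<or> Bj j) \<longrightarrow> x j = s2_join_plus (p j) (q j)"
      using g j unfolding good_def by blast+
    show "x j = vL_i i p q j"
    proof (cases "Aj j")
      case True
      then have pq: "p j = Minus" "q j = Plus" by (simp_all add: Aj_def)
      show ?thesis
      proof (cases "j \<le> i")
        case True then show ?thesis using h j \<open>Aj j\<close> pq by (simp add: vL_coord)
      next
        case False
        then have "x j \<noteq> Plus" using h j \<open>Aj j\<close> by blast
        moreover have "x j \<noteq> Zero" using c1 \<open>Aj j\<close> by blast
        ultimately have "x j = Minus" by (rule s2_cases3[rotated])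
        then show ?thesis using False pq by (simp add: vL_coord)
      qed
    next
      case False
      show ?thesis
      proof (cases "Bj j")
        case True
        then have pq: "p j = Plus" "q j = Minus" by (simp_all add: Bj_def)
        have "x j = Plus" using h j True by blast
        then show ?thesis using pq by (simp add: vL_coord)
      next
        case False2: False
        then have "x j = s2_join_plus (p j) (q j)" using c2 False by blast
        moreover have "s2_vL (p j) (q j) = s2_join_plus (p j) (q j)"
          using False False2 by (intro vLR_nonAB) (simp_all add: Aj_def Bj_def)
        ultimately show ?thesis by (simp add: vL_coord)
      qed
    qed
  qed
qed

lemma vR_eq:
  assumes g: "good x" and i: "i \<le> n"
  shows "x = vR_i i p q \<longleftrightarrow> (\<forall>j\<in>{1..n}. (Bj j \<longrightarrow> (x j = Plus \<longleftrightarrow> j \<le> i)) \<and> (Aj j \<longrightarrow> x j = Plus))"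
proof
  assume e: "x = vR_i i p q"
  show "\<forall>j\<in>{1..n}. (Bj j \<longrightarrow> (x j = Plus \<longleftrightarrow> j \<le> i)) \<and> (Aj j \<longrightarrow> x j = Plus)"
  proof (intro ballI conjI impI)
    fix j assume j: "j \<in> {1..n}"
    { assume "Bj j"
      then have "x j = (if j \<le> i then Plus else Minus)" unfolding e vR_coord Bj_def by simp
      then show "x j = Plus \<longleftrightarrow> j \<le> i" by simp }
    { assume "Aj j"
      then show "x j = Plus" unfolding e vR_coord Aj_def by simp }
  qed
next
  assume h: "\<forall>j\<in>{1..n}. (Bj j \<longrightarrow> (x j = Plus \<longleftrightarrow> j \<le> i)) \<and> (Aj j \<longrightarrow> x j = Plus)"
  have xS: "x \<in> S2n n" using g unfolding good_def by blast
  show "x = vR_i i p q"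
  proof (rule eq_on_range[OF xS vR_S2n[OF i]])
    fix j assume j: "j \<in> {1..n}"
    have c1: "(Aj j \<or> Bj j) \<longrightarrow> x j \<noteq> Zero" and c2: "\<not> (Aj j \<or> Bj j) \<longrightarrow> x j = s2_join_plus (p j) (q j)"
      using g j unfolding good_def by blast+
    show "x j = vR_i i p q j"
    proof (cases "Bj j")
      case True
      then have pq: "p j = Plus" "q j = Minus" by (simp_all add: Bj_def)
      show ?thesis
      proof (cases "j \<le> i")
        case True then show ?thesis using h j \<open>Bj j\<close> pq by (simp add: vR_coord)
      next
        case False
        then have "x j \<noteq> Plus" using h j \<open>Bj j\<close> by blast
        moreover have "x j \<noteq> Zero" using c1 \<open>Bj j\<close> by blast
        ultimately have "x j = Minus" by (rule s2_cases3[rotated])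
        then show ?thesis using False pq by (simp add: vR_coord)
      qed
    next
      case False
      show ?thesis
      proof (cases "Aj j")
        case True
        then have pq: "p j = Minus" "q j = Plus" by (simp_all add: Aj_def)
        have "x j = Plus" using h j True by blast
        then show ?thesis using pq by (simp add: vR_coord)
      next
        case False2: False
        then have "x j = s2_join_plus (p j) (q j)" using c2 False by blast
        moreover have "s2_vR (p j) (q j) = s2_join_plus (p j) (q j)"
          using False False2 by (intro vLR_nonAB) (simp_all add: Aj_def Bj_def)
        ultimately show ?thesis by (simp add: vR_coord)
      qed
    qed
  qed
qed

lemma J_eq:
  assumes g: "good x"
  shows "x = join_i n p q \<longleftrightarrow> (\<forall>j\<in>{1..n}. (Aj j \<or> Bj j) \<longrightarrow> x j = Plus)"
proof
  assume e: "x = join_i n p q"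
  show "\<forall>j\<in>{1..n}. (Aj j \<or> Bj j) \<longrightarrow> x j = Plus"
    unfolding e using J_coord by (auto simp: Aj_def Bj_def)
next
  assume h: "\<forall>j\<in>{1..n}. (Aj j \<or> Bj j) \<longrightarrow> x j = Plus"
  have xS: "x \<in> S2n n" using g unfolding good_def by blast
  show "x = join_i n p q"
  proof (rule eq_on_range[OF xS J_S2n])
    fix j assume j: "j \<in> {1..n}"
    have c2: "\<not> (Aj j \<or> Bj j) \<longrightarrow> x j = s2_join_plus (p j) (q j)"
      using g j unfolding good_def by blast
    have jc: "join_i n p q j = s2_join_plus (p j) (q j)" using j J_coord by simp
    show "x j = join_i n p q j"
    proof (cases "Aj j \<or> Bj j")
      case True
      then have "x j = Plus" using h j by blast
      then show ?thesis unfolding jc using True by (auto simp: Aj_def Bj_def)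
    next
      case False then show ?thesis unfolding jc using c2 by blast
    qed
  qed
qed

definition rhs where "rhs x = (\<Sum>i<n. (1 / (1 + \<alpha> i) - 1 / (1 + \<alpha> (Suc i))) *
              ((if x = vL_i i p q then 1 else 0) + (if x = vR_i i p q then 1 else 0)))
         + (1 - \<alpha> n) / (1 + \<alpha> n) * (if x = join_i n p q then 1 else 0)"

lemma coef: assumes "i < n" shows "1 / (1 + \<alpha> i) - 1 / (1 + \<alpha> (Suc i)) = a (Suc i) - a i"
proof -
  have "0 \<le> \<alpha> i" "0 \<le> \<alpha> (Suc i)" using anonneg assms by auto
  then show ?thesis unfolding a_def by (simp add: field_simps)
qed

lemma coefn: "(1 - \<alpha> n) / (1 + \<alpha> n) = 1 - 2 * a n"
proof -
  have "0 \<le> \<alpha> n" using anonneg by auto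
  then show ?thesis unfolding a_def by (simp add: field_simps)
qed

lemma rhs_split: "rhs x = (\<Sum>i<n. if x = vL_i i p q then a (Suc i) - a i else 0)
   + (\<Sum>i<n. if x = vR_i i p q then a (Suc i) - a i else 0) + (if x = join_i n p q then 1 - 2 * a n else 0)"
proof -
  have "(\<Sum>i<n. (1 / (1 + \<alpha> i) - 1 / (1 + \<alpha> (Suc i))) *
              ((if x = vL_i i p q then 1 else 0) + (if x = vR_i i p q then 1 else 0)))
    = (\<Sum>i<n. (if x = vL_i i p q then a (Suc i) - a i else 0) + (if x = vR_i i p q then a (Suc i) - a i else 0))"
    by (rule sum.cong) (simp_all add: coef distrib_left)
  then show ?thesis unfolding rhs_def coefn sum.distrib by simp
qed

lemma rhs_bad: assumes "\<not> good x" shows "rhs x = 0"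
proof -
  have "x \<noteq> vL_i i p q" "x \<noteq> vR_i i p q" if "i < n" for i
    using vL_good vR_good that assms by auto
  moreover have "x \<noteq> join_i n p q" using J_good assms by auto
  ultimately show ?thesis unfolding rhs_split by simp
qed

end


context fjs begin

lemma Lx_bad: assumes x: "x \<in> I" and ng: "\<not> good x" shows "Rx x \<le> Lx x"
proof -
  have xS: "x \<in> S2n n" using I_S2n[OF x] .
  obtain j where j: "j \<in> {1..n}" and bad: "((Aj j \<or> Bj j) \<and> x j = Zero) \<or> (\<not> (Aj j \<or> Bj j) \<and> x j \<noteq> s2_join_plus (p j) (q j))"
    using ng xS unfolding good_def by blast
  have "snd (lr (a j) (p j) (q j) (x j)) \<le> fst (lr (a j) (p j) (q j) (x j))"
    by (rule lr_bad_coord[OF xj_In1[OF x j]]) (use bad in \<open>simp add: Aj_def Bj_def\<close>)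
  then show ?thesis using Lx_ge[OF j, of x] Rx_le[OF j, of x] by linarith
qed

lemma case1:
  assumes g: "good x" and hA: "\<forall>j\<in>{1..n}. Aj j \<longrightarrow> x j = Plus" and hB: "\<forall>j\<in>{1..n}. Bj j \<longrightarrow> x j = Plus"
  shows "rhs x = max 0 (Rx x - Lx x)"
proof -
  define SA where "SA = {j\<in>{1..n}. Aj j}"
  define SB where "SB = {j\<in>{1..n}. Bj j}"
  define mA where "mA = Max (insert 0 SA)"
  define mB where "mB = Max (insert 0 SB)"
  have SAs: "SA \<subseteq> {1..n}" and SBs: "SB \<subseteq> {1..n}" by (auto simp: SA_def SB_def)
  have mAn: "mA \<le> n" unfolding mA_def by (rule Max0_props(1)[OF SAs])
  have mBn: "mB \<le> n" unfolding mB_def by (rule Max0_props(1)[OF SBs])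
  have mAge: "j \<le> mA" if "j \<in> SA" for j unfolding mA_def by (rule Max0_props(2)[OF SAs that])
  have mBge: "j \<le> mB" if "j \<in> SB" for j unfolding mB_def by (rule Max0_props(2)[OF SBs that])
  have mAle: "mA \<le> i \<longleftrightarrow> (\<forall>j\<in>SA. j \<le> i)" for i unfolding mA_def by (rule Max0_props(5)[OF SAs])
  have mBle: "mB \<le> i \<longleftrightarrow> (\<forall>j\<in>SB. j \<le> i)" for i unfolding mB_def by (rule Max0_props(5)[OF SBs])
  have mAmem: "mA = 0 \<or> mA \<in> SA" unfolding mA_def using Max0_props(3,4)[OF SAs] by blast
  have mBmem: "mB = 0 \<or> mB \<in> SB" unfolding mB_def using Max0_props(3,4)[OF SBs] by blast
  have vL: "x = vL_i i p q \<longleftrightarrow> mA \<le> i \<and> i < n" if i: "i < n" for i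
  proof -
    have "x = vL_i i p q \<longleftrightarrow> (\<forall>j\<in>{1..n}. (Aj j \<longrightarrow> (x j = Plus \<longleftrightarrow> j \<le> i)) \<and> (Bj j \<longrightarrow> x j = Plus))"
      using vL_eq[OF g] i by simp
    also have "\<dots> \<longleftrightarrow> (\<forall>j\<in>SA. j \<le> i)" using hA hB unfolding SA_def by auto
    finally show ?thesis using mAle i by simp
  qed
  have vR: "x = vR_i i p q \<longleftrightarrow> mB \<le> i \<and> i < n" if i: "i < n" for i
  proof -
    have "x = vR_i i p q \<longleftrightarrow> (\<forall>j\<in>{1..n}. (Bj j \<longrightarrow> (x j = Plus \<longleftrightarrow> j \<le> i)) \<and> (Aj j \<longrightarrow> x j = Plus))"
      using vR_eq[OF g] i by simp
    also have "\<dots> \<longleftrightarrow> (\<forall>j\<in>SB. j \<le> i)" using hA hB unfolding SB_def by auto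
    finally show ?thesis using mBle i by simp
  qed
  have J: "x = join_i n p q" using J_eq[OF g] hA hB by blast
  have s1: "(\<Sum>i<n. if x = vL_i i p q then a (Suc i) - a i else 0) = a n - a mA"
  proof -
    have "(\<Sum>i<n. if x = vL_i i p q then a (Suc i) - a i else 0) = (\<Sum>i<n. if mA \<le> i \<and> i < n then a (Suc i) - a i else 0)"
      by (rule sum.cong) (simp_all add: vL)
    also have "\<dots> = a n - a mA" by (rule tele[OF mAn order_refl])
    finally show ?thesis .
  qed
  have s2: "(\<Sum>i<n. if x = vR_i i p q then a (Suc i) - a i else 0) = a n - a mB"
  proof -
    have "(\<Sum>i<n. if x = vR_i i p q then a (Suc i) - a i else 0) = (\<Sum>i<n. if mB \<le> i \<and> i < n then a (Suc i) - a i else 0)"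
      by (rule sum.cong) (simp_all add: vR)
    also have "\<dots> = a n - a mB" by (rule tele[OF mBn order_refl])
    finally show ?thesis .
  qed
  have L: "Lx x = a mA"
  proof (rule Lx_eqI)
    fix j assume j: "j \<in> {1..n}"
    show "fst (lr (a j) (p j) (q j) (x j)) \<le> a mA"
    proof (cases "Aj j")
      case True
      then have "j \<in> SA" using j by (simp add: SA_def)
      then have "a j \<le> a mA" using mAge mAn by (intro a_mono) auto
      then show ?thesis unfolding lr_good[OF g j] using True hA j by auto
    next
      case False
      then show ?thesis unfolding lr_good[OF g j] using hB j a_nonneg[OF mAn] by auto
    qed
  next
    show "0 \<le> a mA" by (rule a_nonneg[OF mAn])
  next
    show "a mA = 0 \<or> (\<exists>j\<in>{1..n}. fst (lr (a j) (p j) (q j) (x j)) = a mA)"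
    proof (cases "mA = 0")
      case True then show ?thesis by (simp add: a0)
    next
      case False
      then have m: "mA \<in> SA" using mAmem by simp
      then have mr: "mA \<in> {1..n}" and am: "Aj mA" by (simp_all add: SA_def)
      have "fst (lr (a mA) (p mA) (q mA) (x mA)) = a mA" unfolding lr_good[OF g mr] using hA mr am by simp
      then show ?thesis using mr by blast
    qed
  qed
  have R: "Rx x = 1 - a mB"
  proof (rule Rx_eqI)
    fix j assume j: "j \<in> {1..n}"
    show "1 - a mB \<le> snd (lr (a j) (p j) (q j) (x j))"
    proof (cases "Bj j")
      case True
      then have "j \<in> SB" using j by (simp add: SB_def)
      then have "a j \<le> a mB" using mBge mBn by (intro a_mono) auto
      then show ?thesis unfolding lr_good[OF g j] using True hB hA j AB_excl by auto
    next
      case False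
      then show ?thesis unfolding lr_good[OF g j] using hA j a_nonneg[OF mBn] by auto
    qed
  next
    show "1 - a mB \<le> 1" using a_nonneg[OF mBn] by simp
  next
    show "1 - a mB = 1 \<or> (\<exists>j\<in>{1..n}. snd (lr (a j) (p j) (q j) (x j)) = 1 - a mB)"
    proof (cases "mB = 0")
      case True then show ?thesis by (simp add: a0)
    next
      case False
      then have m: "mB \<in> SB" using mBmem by simp
      then have mr: "mB \<in> {1..n}" and am: "Bj mB" by (simp_all add: SB_def)
      have "snd (lr (a mB) (p mB) (q mB) (x mB)) = 1 - a mB" unfolding lr_good[OF g mr] using hB mr am AB_excl by auto
      then show ?thesis using mr by blast
    qed
  qed
  have "rhs x = (a n - a mA) + (a n - a mB) + (1 - 2 * a n)" unfolding rhs_split s1 s2 using J by simp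
  moreover have "a mA \<le> 1/2" "a mB \<le> 1/2" using a_half mAn mBn by auto
  ultimately show ?thesis unfolding L R by simp
qed


lemma case2:
  assumes g: "good x" and hM: "{j\<in>{1..n}. Aj j \<and> x j \<noteq> Plus} \<noteq> {}" and hB: "\<forall>j\<in>{1..n}. Bj j \<longrightarrow> x j = Plus"
  shows "rhs x = max 0 (Rx x - Lx x)"
proof -
  define PA where "PA = {j\<in>{1..n}. Aj j \<and> x j = Plus}"
  define MA where "MA = {j\<in>{1..n}. Aj j \<and> x j \<noteq> Plus}"
  define mP where "mP = Max (insert 0 PA)"
  define mM where "mM = Min MA"
  have PAs: "PA \<subseteq> {1..n}" and MAs: "MA \<subseteq> {1..n}" by (auto simp: PA_def MA_def)
  have MAne: "MA \<noteq> {}" using hM unfolding MA_def .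
  have mPn: "mP \<le> n" unfolding mP_def by (rule Max0_props(1)[OF PAs])
  have mPge: "j \<le> mP" if "j \<in> PA" for j unfolding mP_def by (rule Max0_props(2)[OF PAs that])
  have mPle: "mP \<le> i \<longleftrightarrow> (\<forall>j\<in>PA. j \<le> i)" for i unfolding mP_def by (rule Max0_props(5)[OF PAs])
  have mPmem: "mP = 0 \<or> mP \<in> PA" unfolding mP_def using Max0_props(3,4)[OF PAs] by blast
  have mMin: "mM \<in> MA" unfolding mM_def by (rule Min_props(1)[OF MAs MAne])
  have mMn: "mM \<le> n" unfolding mM_def by (rule Min_props(2)[OF MAs MAne])
  have mMle: "mM \<le> j" if "j \<in> MA" for j unfolding mM_def by (rule Min_props(3)[OF MAs MAne that])
  have mMlt: "i < mM \<longleftrightarrow> (\<forall>j\<in>MA. i < j)" for i unfolding mM_def by (rule Min_props(4)[OF MAs MAne])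
  obtain j0 where j0: "j0 \<in> {1..n}" "Aj j0" "x j0 \<noteq> Plus" using MAne unfolding MA_def by blast
  have vL: "x = vL_i i p q \<longleftrightarrow> mP \<le> i \<and> i < mM" if i: "i < n" for i
  proof -
    have "x = vL_i i p q \<longleftrightarrow> (\<forall>j\<in>{1..n}. (Aj j \<longrightarrow> (x j = Plus \<longleftrightarrow> j \<le> i)) \<and> (Bj j \<longrightarrow> x j = Plus))"
      using vL_eq[OF g] i by simp
    also have "\<dots> \<longleftrightarrow> (\<forall>j\<in>PA. j \<le> i) \<and> (\<forall>j\<in>MA. i < j)" using hB unfolding PA_def MA_def by auto
    finally show ?thesis using mPle mMlt by simp
  qed
  have vR: "x \<noteq> vR_i i p q" if i: "i < n" for i
    using vR_eq[OF g, of i] i j0 by auto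
  have J: "x \<noteq> join_i n p q" using J_eq[OF g] j0 by auto
  have L: "Lx x = a mP"
  proof (rule Lx_eqI)
    fix j assume j: "j \<in> {1..n}"
    show "fst (lr (a j) (p j) (q j) (x j)) \<le> a mP"
    proof (cases "Aj j \<and> x j = Plus")
      case True
      then have "j \<in> PA" using j by (simp add: PA_def)
      then have "a j \<le> a mP" using mPge mPn by (intro a_mono) auto
      then show ?thesis unfolding lr_good[OF g j] using True by auto
    next
      case False
      then show ?thesis unfolding lr_good[OF g j] using hB j a_nonneg[OF mPn] by auto
    qed
  next
    show "0 \<le> a mP" by (rule a_nonneg[OF mPn])
  next
    show "a mP = 0 \<or> (\<exists>j\<in>{1..n}. fst (lr (a j) (p j) (q j) (x j)) = a mP)"
    proof (cases "mP = 0")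
      case True then show ?thesis by (simp add: a0)
    next
      case False
      then have m: "mP \<in> PA" using mPmem by simp
      then have mr: "mP \<in> {1..n}" and am: "Aj mP" "x mP = Plus" by (simp_all add: PA_def)
      have "fst (lr (a mP) (p mP) (q mP) (x mP)) = a mP" unfolding lr_good[OF g mr] using am by simp
      then show ?thesis using mr by blast
    qed
  qed
  have R: "Rx x = a mM"
  proof (rule Rx_eqI)
    fix j assume j: "j \<in> {1..n}"
    have hm: "a mM \<le> 1/2" using a_half mMn by simp
    show "a mM \<le> snd (lr (a j) (p j) (q j) (x j))"
    proof (cases "Aj j \<and> x j \<noteq> Plus")
      case True
      then have "j \<in> MA" using j by (simp add: MA_def)
      then have "a mM \<le> a j" using mMle j by (intro a_mono) auto
      then show ?thesis unfolding lr_good[OF g j] using True by auto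
    next
      case False
      have "a j \<le> 1/2" using a_half j by simp
      then show ?thesis unfolding lr_good[OF g j] using False hm by auto
    qed
  next
    show "a mM \<le> 1" using a_half mMn by fastforce
  next
    have mr: "mM \<in> {1..n}" and am: "Aj mM" "x mM \<noteq> Plus" using mMin by (simp_all add: MA_def)
    have "snd (lr (a mM) (p mM) (q mM) (x mM)) = a mM" unfolding lr_good[OF g mr] using am by simp
    then show "a mM = 1 \<or> (\<exists>j\<in>{1..n}. snd (lr (a j) (p j) (q j) (x j)) = a mM)" using mr by blast
  qed
  have s1: "(\<Sum>i<n. if x = vL_i i p q then a (Suc i) - a i else 0) = (\<Sum>i<n. if mP \<le> i \<and> i < mM then a (Suc i) - a i else 0)"
    by (rule sum.cong) (simp_all add: vL)
  have s2: "(\<Sum>i<n. if x = vR_i i p q then a (Suc i) - a i else 0) = 0"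
    by (rule sum.neutral) (simp add: vR)
  have r: "rhs x = (\<Sum>i<n. if mP \<le> i \<and> i < mM then a (Suc i) - a i else 0)"
    unfolding rhs_split s1 s2 using J by simp
  show ?thesis
  proof (cases "mP \<le> mM")
    case True
    have "rhs x = a mM - a mP" unfolding r by (rule tele[OF True mMn])
    moreover have "a mP \<le> a mM" using True mMn by (rule a_mono)
    ultimately show ?thesis unfolding L R by simp
  next
    case False
    have "rhs x = 0" unfolding r using False by (intro tele0) simp
    moreover have "a mM \<le> a mP" using False mPn by (intro a_mono) auto
    ultimately show ?thesis unfolding L R by simp
  qed
qed


lemma case3:
  assumes g: "good x" and hM: "{j\<in>{1..n}. Bj j \<and> x j \<noteq> Plus} \<noteq> {}" and hA: "\<forall>j\<in>{1..n}. Aj j \<longrightarrow> x j = Plus"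
  shows "rhs x = max 0 (Rx x - Lx x)"
proof -
  define PB where "PB = {j\<in>{1..n}. Bj j \<and> x j = Plus}"
  define MB where "MB = {j\<in>{1..n}. Bj j \<and> x j \<noteq> Plus}"
  define mP where "mP = Max (insert 0 PB)"
  define mM where "mM = Min MB"
  have PBs: "PB \<subseteq> {1..n}" and MBs: "MB \<subseteq> {1..n}" by (auto simp: PB_def MB_def)
  have MBne: "MB \<noteq> {}" using hM unfolding MB_def .
  have mPn: "mP \<le> n" unfolding mP_def by (rule Max0_props(1)[OF PBs])
  have mPge: "j \<le> mP" if "j \<in> PB" for j unfolding mP_def by (rule Max0_props(2)[OF PBs that])
  have mPle: "mP \<le> i \<longleftrightarrow> (\<forall>j\<in>PB. j \<le> i)" for i unfolding mP_def by (rule Max0_props(5)[OF PBs])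
  have mPmem: "mP = 0 \<or> mP \<in> PB" unfolding mP_def using Max0_props(3,4)[OF PBs] by blast
  have mMin: "mM \<in> MB" unfolding mM_def by (rule Min_props(1)[OF MBs MBne])
  have mMn: "mM \<le> n" unfolding mM_def by (rule Min_props(2)[OF MBs MBne])
  have mMle: "mM \<le> j" if "j \<in> MB" for j unfolding mM_def by (rule Min_props(3)[OF MBs MBne that])
  have mMlt: "i < mM \<longleftrightarrow> (\<forall>j\<in>MB. i < j)" for i unfolding mM_def by (rule Min_props(4)[OF MBs MBne])
  obtain j0 where j0: "j0 \<in> {1..n}" "Bj j0" "x j0 \<noteq> Plus" using MBne unfolding MB_def by blast
  have vR: "x = vR_i i p q \<longleftrightarrow> mP \<le> i \<and> i < mM" if i: "i < n" for i
  proof -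
    have "x = vR_i i p q \<longleftrightarrow> (\<forall>j\<in>{1..n}. (Bj j \<longrightarrow> (x j = Plus \<longleftrightarrow> j \<le> i)) \<and> (Aj j \<longrightarrow> x j = Plus))"
      using vR_eq[OF g] i by simp
    also have "\<dots> \<longleftrightarrow> (\<forall>j\<in>PB. j \<le> i) \<and> (\<forall>j\<in>MB. i < j)" using hA unfolding PB_def MB_def by auto
    finally show ?thesis using mPle mMlt by simp
  qed
  have vL: "x \<noteq> vL_i i p q" if i: "i < n" for i
    using vL_eq[OF g, of i] i j0 by auto
  have J: "x \<noteq> join_i n p q" using J_eq[OF g] j0 by auto
  have hm: "a mM \<le> 1/2" using a_half mMn by simp
  have L: "Lx x = 1 - a mM"
  proof (rule Lx_eqI)
    fix j assume j: "j \<in> {1..n}"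
    show "fst (lr (a j) (p j) (q j) (x j)) \<le> 1 - a mM"
    proof (cases "Bj j \<and> x j \<noteq> Plus")
      case True
      then have "j \<in> MB" using j by (simp add: MB_def)
      then have "a mM \<le> a j" using mMle j by (intro a_mono) auto
      then show ?thesis unfolding lr_good[OF g j] using True AB_excl by auto
    next
      case False
      have "a j \<le> 1/2" using a_half j by simp
      then show ?thesis unfolding lr_good[OF g j] using False hm by auto
    qed
  next
    show "0 \<le> 1 - a mM" using hm by simp
  next
    have mr: "mM \<in> {1..n}" and am: "Bj mM" "x mM \<noteq> Plus" using mMin by (simp_all add: MB_def)
    have "fst (lr (a mM) (p mM) (q mM) (x mM)) = 1 - a mM" unfolding lr_good[OF g mr] using am AB_excl by auto
    then show "1 - a mM = 0 \<or> (\<exists>j\<in>{1..n}. fst (lr (a j) (p j) (q j) (x j)) = 1 - a mM)" using mr by blast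
  qed
  have R: "Rx x = 1 - a mP"
  proof (rule Rx_eqI)
    fix j assume j: "j \<in> {1..n}"
    show "1 - a mP \<le> snd (lr (a j) (p j) (q j) (x j))"
    proof (cases "Bj j \<and> x j = Plus")
      case True
      then have "j \<in> PB" using j by (simp add: PB_def)
      then have "a j \<le> a mP" using mPge mPn by (intro a_mono) auto
      then show ?thesis unfolding lr_good[OF g j] using True AB_excl by auto
    next
      case False
      then show ?thesis unfolding lr_good[OF g j] using hA j a_nonneg[OF mPn] by auto
    qed
  next
    show "1 - a mP \<le> 1" using a_nonneg[OF mPn] by simp
  next
    show "1 - a mP = 1 \<or> (\<exists>j\<in>{1..n}. snd (lr (a j) (p j) (q j) (x j)) = 1 - a mP)"
    proof (cases "mP = 0")
      case True then show ?thesis by (simp add: a0)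
    next
      case False
      then have m: "mP \<in> PB" using mPmem by simp
      then have mr: "mP \<in> {1..n}" and am: "Bj mP" "x mP = Plus" by (simp_all add: PB_def)
      have "snd (lr (a mP) (p mP) (q mP) (x mP)) = 1 - a mP" unfolding lr_good[OF g mr] using am AB_excl by auto
      then show ?thesis using mr by blast
    qed
  qed
  have s1: "(\<Sum>i<n. if x = vR_i i p q then a (Suc i) - a i else 0) = (\<Sum>i<n. if mP \<le> i \<and> i < mM then a (Suc i) - a i else 0)"
    by (rule sum.cong) (simp_all add: vR)
  have s2: "(\<Sum>i<n. if x = vL_i i p q then a (Suc i) - a i else 0) = 0"
    by (rule sum.neutral) (simp add: vL)
  have r: "rhs x = (\<Sum>i<n. if mP \<le> i \<and> i < mM then a (Suc i) - a i else 0)"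
    unfolding rhs_split s1 s2 using J by simp
  show ?thesis
  proof (cases "mP \<le> mM")
    case True
    have "rhs x = a mM - a mP" unfolding r by (rule tele[OF True mMn])
    moreover have "a mP \<le> a mM" using True mMn by (rule a_mono)
    ultimately show ?thesis unfolding L R by simp
  next
    case False
    have "rhs x = 0" unfolding r using False by (intro tele0) simp
    moreover have "a mM \<le> a mP" using False mPn by (intro a_mono) auto
    ultimately show ?thesis unfolding L R by simp
  qed
qed

lemma case4:
  assumes g: "good x" and jA: "jA \<in> {1..n}" "Aj jA" "x jA \<noteq> Plus" and jB: "jB \<in> {1..n}" "Bj jB" "x jB \<noteq> Plus"
  shows "rhs x = max 0 (Rx x - Lx x)"
proof -
  have vL: "x \<noteq> vL_i i p q" if i: "i < n" for i using vL_eq[OF g, of i] i jB by auto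
  have vR: "x \<noteq> vR_i i p q" if i: "i < n" for i using vR_eq[OF g, of i] i jA by auto
  have J: "x \<noteq> join_i n p q" using J_eq[OF g] jA by auto
  have r: "rhs x = 0" unfolding rhs_split using vL vR J by simp
  have "fst (lr (a jB) (p jB) (q jB) (x jB)) = 1 - a jB" unfolding lr_good[OF g jB(1)] using jB AB_excl by auto
  then have L: "1 - a jB \<le> Lx x" using Lx_ge[OF jB(1), of x] by simp
  have "snd (lr (a jA) (p jA) (q jA) (x jA)) = a jA" unfolding lr_good[OF g jA(1)] using jA by auto
  then have R: "Rx x \<le> a jA" using Rx_le[OF jA(1), of x] by simp
  have "a jA \<le> 1/2" "a jB \<le> 1/2" using a_half jA jB by auto
  then show ?thesis using r L R by simp
qed

lemma F5_good: assumes g: "good x" shows "rhs x = max 0 (Rx x - Lx x)"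
proof (cases "\<exists>j\<in>{1..n}. Aj j \<and> x j \<noteq> Plus")
  case True
  then obtain jA where jA: "jA \<in> {1..n}" "Aj jA" "x jA \<noteq> Plus" by blast
  show ?thesis
  proof (cases "\<exists>j\<in>{1..n}. Bj j \<and> x j \<noteq> Plus")
    case True
    then obtain jB where jB: "jB \<in> {1..n}" "Bj jB" "x jB \<noteq> Plus" by blast
    show ?thesis by (rule case4[OF g jA jB])
  next
    case False
    have "{j\<in>{1..n}. Aj j \<and> x j \<noteq> Plus} \<noteq> {}" using jA by blast
    moreover have "\<forall>j\<in>{1..n}. Bj j \<longrightarrow> x j = Plus" using False by blast
    ultimately show ?thesis by (rule case2[OF g])
  qed
next
  case False1: False
  show ?thesis
  proof (cases "\<exists>j\<in>{1..n}. Bj j \<and> x j \<noteq> Plus")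
    case True
    then have "{j\<in>{1..n}. Bj j \<and> x j \<noteq> Plus} \<noteq> {}" by blast
    moreover have "\<forall>j\<in>{1..n}. Aj j \<longrightarrow> x j = Plus" using False1 by blast
    ultimately show ?thesis by (rule case3[OF g])
  next
    case False
    have "\<forall>j\<in>{1..n}. Aj j \<longrightarrow> x j = Plus" "\<forall>j\<in>{1..n}. Bj j \<longrightarrow> x j = Plus" using False1 False by blast+
    then show ?thesis by (rule case1[OF g])
  qed
qed

lemma main: "frac_join n \<alpha> p q x = rhs x"
proof (cases "x \<in> Eset n \<alpha> p q")
  case True
  have x: "x \<in> I" using True unfolding Eset_def by blast
  have "{u \<in> Eset n \<alpha> p q. u = x} = {x}" using True by blast
  then have "frac_join n \<alpha> p q x = cone_measure (cone n \<alpha> x p q)" unfolding frac_join_def by simp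
  also have "\<dots> = Rx x - Lx x" unfolding cone_eq[OF x]
    by (rule cone_measure_eq[OF Lx_nonneg F3[OF True] Rx_le1])
  also have "\<dots> = rhs x"
  proof (cases "good x")
    case True
    then show ?thesis using F5_good F3[OF \<open>x \<in> Eset n \<alpha> p q\<close>] by simp
  next
    case False
    then show ?thesis using rhs_bad Lx_bad[OF x] F3[OF \<open>x \<in> Eset n \<alpha> p q\<close>] by simp
  qed
  finally show ?thesis .
next
  case False
  have e: "{u \<in> Eset n \<alpha> p q. u = x} = {}" using False by blast
  have z: "frac_join n \<alpha> p q x = 0" unfolding frac_join_def e by simp
  show ?thesis
  proof (cases "good x")
    case True
    have "\<not> Lx x < Rx x" using F2[OF good_I[OF True]] False by blast
    then show ?thesis using z F5_good[OF True] by simp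
  next
    case False
    then show ?thesis using z rhs_bad by simp
  qed
qed

end

theorem proposition3p15:
  fixes n :: nat and \<alpha> :: "nat \<Rightarrow> real" and p q :: "nat \<Rightarrow> s2"
  assumes alpha0: "\<alpha> 0 = 0"
    and pos: "n \<ge> 1 \<Longrightarrow> 0 < \<alpha> 1"
    and mono: "\<And>j. 1 \<le> j \<Longrightarrow> j < n \<Longrightarrow> \<alpha> j \<le> \<alpha> (Suc j)"
    and le1: "\<alpha> n \<le> 1"
    and p: "p \<in> S2n n" and q: "q \<in> S2n n"
  shows "frac_join n \<alpha> p q =
    (\<lambda>x. (\<Sum>i<n. (1 / (1 + \<alpha> i) - 1 / (1 + \<alpha> (Suc i))) *
              ((if x = vL_i i p q then 1 else 0) + (if x = vR_i i p q then 1 else 0)))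
         + (1 - \<alpha> n) / (1 + \<alpha> n) * (if x = join_i n p q then 1 else 0))"
proof -
  interpret fjs n \<alpha> p q
    using alpha0 pos mono le1 p q by unfold_locales auto
  show ?thesis
  proof (rule ext)
    fix x
    show "frac_join n \<alpha> p q x = (\<lambda>x. (\<Sum>i<n. (1 / (1 + \<alpha> i) - 1 / (1 + \<alpha> (Suc i))) *
              ((if x = vL_i i p q then 1 else 0) + (if x = vR_i i p q then 1 else 0)))
         + (1 - \<alpha> n) / (1 + \<alpha> n) * (if x = join_i n p q then 1 else 0)) x"
      using main[of x] unfolding rhs_def by simp
  qed
qed

end
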